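(* Let $W$ be an affine Weyl group and $x\in W$. Let $r_1,r_2$ be reflections in $W$ whose hyperplanes $H_1=H_{r_1}$, $H_2=H_{r_2}$ are parallel. Suppose $j\in D_R(x)$. Let $H_3$ be the hyperplane of the reflection $xs_jx^{-1}$ (the wall separating $x$ from $xs_j$) and $H_4$ the hyperplane of the reflection $r_2r_1xs_jx^{-1}r_1r_2$. Assume that the identity alcove does not lie in the region strictly between $H_3$ and $H_4$. Then $j\in D_R(r_2r_1x)$.
   Context: $W$ is the affine Weyl group of a crystallographic root system, a Coxeter group with simple generators $s_j$, acting on Euclidean space; its reflections are the reflections in the hyperplanes $H_{\beta,k}=\{v:\langle v,\beta\rangle=k\}$, and $H_r$ is the hyperplane of the reflection $r$. Elements of $W$ are identified with alcoves ($w\mapsto wA_0$, the identity alcove being $A_0$). $\ell$ is length; $D_R(x)=\{j:\ell(xs_j)<\ell(x)\}$. *)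

theory Defs
  imports "HOL-Analysis.Analysis"
begin

definition root_system :: "'a::euclidean_space set \<Rightarrow> bool" where
  "root_system \<Phi> \<longleftrightarrow> finite \<Phi> \<and> 0 \<notin> \<Phi> \<and> span \<Phi> = UNIV
     \<and> (\<forall>\<alpha>\<in>\<Phi>. \<forall>\<beta>\<in>\<Phi>. \<beta> - (2 * (\<beta> \<bullet> \<alpha>) / (\<alpha> \<bullet> \<alpha>)) *\<^sub>R \<alpha> \<in> \<Phi>)
     \<and> (\<forall>\<alpha>\<in>\<Phi>. \<forall>\<beta>\<in>\<Phi>. 2 * (\<beta> \<bullet> \<alpha>) / (\<alpha> \<bullet> \<alpha>) \<in> \<int>)
     \<and> (\<forall>\<alpha>\<in>\<Phi>. \<forall>c::real. c *\<^sub>R \<alpha> \<in> \<Phi> \<longrightarrow> c = 1 \<or> c = -1)"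

definition aff_refl :: "'a::euclidean_space \<Rightarrow> int \<Rightarrow> 'a \<Rightarrow> 'a" where
  "aff_refl \<beta> k v = v - ((v \<bullet> \<beta> - of_int k) * (2 / (\<beta> \<bullet> \<beta>))) *\<^sub>R \<beta>"

definition refls :: "'a::euclidean_space set \<Rightarrow> ('a \<Rightarrow> 'a) set" where
  "refls \<Phi> = {aff_refl \<beta> k | \<beta> k. \<beta> \<in> \<Phi>}"

inductive_set affW :: "'a::euclidean_space set \<Rightarrow> ('a \<Rightarrow> 'a) set" for \<Phi> where
  affW_id: "id \<in> affW \<Phi>"
| affW_step: "r \<in> refls \<Phi> \<Longrightarrow> w \<in> affW \<Phi> \<Longrightarrow> r \<circ> w \<in> affW \<Phi>"

definition hyps :: "'a::euclidean_space set \<Rightarrow> 'a set set" where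
  "hyps \<Phi> = {{v. v \<bullet> \<beta> = of_int k} | \<beta> k. \<beta> \<in> \<Phi>}"

definition alcove :: "'a::euclidean_space set \<Rightarrow> 'a set \<Rightarrow> bool" where
  "alcove \<Phi> A \<longleftrightarrow> A \<in> components (- \<Union>(hyps \<Phi>))"

definition fixH :: "('a \<Rightarrow> 'a) \<Rightarrow> 'a set" where
  "fixH r = {v. r v = v}"

text \<open>Simple reflections w.r.t. the fundamental alcove A0: reflections in the walls
  (facets) of A0.\<close>
definition simple_refls :: "'a::euclidean_space set \<Rightarrow> 'a set \<Rightarrow> ('a \<Rightarrow> 'a) set" where
  "simple_refls \<Phi> A0 = {r \<in> refls \<Phi>. aff_dim (fixH r \<inter> closure A0) = int DIM('a) - 1}"

definition coxeter_length :: "('a \<Rightarrow> 'a) set \<Rightarrow> ('a \<Rightarrow> 'a) \<Rightarrow> nat" where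
  "coxeter_length S w = (LEAST n. \<exists>ss. length ss = n \<and> set ss \<subseteq> S \<and> w = foldr (\<circ>) ss id)"

definition strictly_between :: "'a::euclidean_space set \<Rightarrow> 'a set \<Rightarrow> 'a set" where
  "strictly_between H H' = {v. \<exists>p\<in>H. \<exists>q\<in>H'. v \<in> open_segment p q} - (H \<union> H')"

end

theory Submission
  imports Defs
begin


definition rf :: "'a::euclidean_space \<Rightarrow> real \<Rightarrow> 'a \<Rightarrow> 'a" where
  "rf \<beta> k v = v - ((v \<bullet> \<beta> - k) * (2 / (\<beta> \<bullet> \<beta>))) *\<^sub>R \<beta>"

lemma aff_refl_rf: "aff_refl \<beta> k = rf \<beta> (of_int k)"
  by (auto simp: aff_refl_def rf_def fun_eq_iff)

lemma rf_inner: "\<beta> \<noteq> 0 \<Longrightarrow> rf \<beta> k v \<bullet> \<beta> = 2*k - v \<bullet> \<beta>"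
  by (simp add: rf_def inner_diff_left field_simps)

lemma scaleR_comb: "v - a *\<^sub>R \<beta> - b *\<^sub>R \<beta> = v - (a + b) *\<^sub>R (\<beta>::'a::real_vector)"
  by (simp add: algebra_simps)

lemma rf_invol: "\<beta> \<noteq> 0 \<Longrightarrow> rf \<beta> k (rf \<beta> k v) = v"
proof -
  assume b: "\<beta> \<noteq> 0"
  have "rf \<beta> k (rf \<beta> k v) = rf \<beta> k v - ((2*k - v \<bullet> \<beta> - k) * (2 / (\<beta> \<bullet> \<beta>))) *\<^sub>R \<beta>"
    using rf_inner[OF b] by (simp add: rf_def)
  also have "\<dots> = v - ((v \<bullet> \<beta> - k) * (2 / (\<beta> \<bullet> \<beta>)) + (2*k - v \<bullet> \<beta> - k) * (2 / (\<beta> \<bullet> \<beta>))) *\<^sub>R \<beta>"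
    unfolding rf_def scaleR_comb ..
  also have "(v \<bullet> \<beta> - k) * (2 / (\<beta> \<bullet> \<beta>)) + (2*k - v \<bullet> \<beta> - k) * (2 / (\<beta> \<bullet> \<beta>)) = 0"
    using b by (simp add: field_simps)
  finally show ?thesis by simp
qed

lemma fix_rf: "\<beta> \<noteq> 0 \<Longrightarrow> (rf \<beta> k v = v) \<longleftrightarrow> v \<bullet> \<beta> = k"
  by (auto simp: rf_def)

lemma rf_scale: "c \<noteq> 0 \<Longrightarrow> rf (c *\<^sub>R \<beta>) (c*k) = rf \<beta> k"
  by (auto simp: rf_def fun_eq_iff field_simps)

lemma rf_comp: "\<beta> \<noteq> 0 \<Longrightarrow> rf \<beta> b (rf \<beta> a v) = v + ((b - a) * (2/(\<beta>\<bullet>\<beta>))) *\<^sub>R \<beta>"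
proof -
  assume bb: "\<beta> \<noteq> 0"
  have "rf \<beta> b (rf \<beta> a v) = rf \<beta> a v - ((2*a - v \<bullet> \<beta> - b) * (2 / (\<beta> \<bullet> \<beta>))) *\<^sub>R \<beta>"
    using rf_inner[OF bb] by (simp add: rf_def)
  also have "\<dots> = v - ((v \<bullet> \<beta> - a) * (2 / (\<beta> \<bullet> \<beta>)) + (2*a - v \<bullet> \<beta> - b) * (2 / (\<beta> \<bullet> \<beta>))) *\<^sub>R \<beta>"
    unfolding rf_def scaleR_comb ..
  also have "(v \<bullet> \<beta> - a) * (2 / (\<beta> \<bullet> \<beta>)) + (2*a - v \<bullet> \<beta> - b) * (2 / (\<beta> \<bullet> \<beta>)) = - ((b - a) * (2/(\<beta>\<bullet>\<beta>)))"
    using bb by (simp add: field_simps)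
  finally show ?thesis by simp
qed

lemma rf_conj:
  assumes a: "\<alpha> \<noteq> 0" and b: "\<beta> \<noteq> 0"
  defines "c \<equiv> 2 * (\<beta> \<bullet> \<alpha>) / (\<alpha> \<bullet> \<alpha>)"
  shows "rf \<alpha> m (rf \<beta> k (rf \<alpha> m v)) = rf (\<beta> - c *\<^sub>R \<alpha>) (k - c * m) v"
proof -
  define \<alpha>2 where "\<alpha>2 = (2 / (\<alpha> \<bullet> \<alpha>)) *\<^sub>R \<alpha>"
  define L where "L = (\<lambda>u. u - (u \<bullet> \<alpha>) *\<^sub>R \<alpha>2)"
  define \<mu> where "\<mu> = m"
  have aa: "\<alpha> \<bullet> \<alpha> \<noteq> 0" using a by simp
  have a2: "\<alpha> \<bullet> \<alpha>2 = 2" using aa by (simp add: \<alpha>2_def)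
  have g: "\<And>u. rf \<alpha> m u = L u + \<mu> *\<^sub>R \<alpha>2"
  proof -
    fix u
    have "rf \<alpha> m u = u - (u \<bullet> \<alpha> - m) *\<^sub>R \<alpha>2"
      unfolding rf_def \<alpha>2_def by (simp add: mult.commute)
    then show "rf \<alpha> m u = L u + \<mu> *\<^sub>R \<alpha>2" unfolding L_def \<mu>_def
      by (simp add: scaleR_diff_left)
  qed
  have Lb: "L \<beta> = \<beta> - c *\<^sub>R \<alpha>" by (simp add: L_def c_def inner_commute \<alpha>2_def)
  have Ladd: "\<And>u w. L (u + w) = L u + L w"
    by (simp add: L_def inner_add_left scaleR_add_left)
  have Lsc: "\<And>r u. L (r *\<^sub>R u) = r *\<^sub>R L u" by (simp add: L_def scaleR_diff_right)
  have La: "L \<alpha>2 = - \<alpha>2"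
  proof -
    have "L \<alpha>2 = \<alpha>2 - 2 *\<^sub>R \<alpha>2" using a2 by (simp add: L_def inner_commute)
    also have "\<alpha>2 - 2 *\<^sub>R \<alpha>2 = - \<alpha>2" by (simp add: scaleR_2)
    finally show ?thesis .
  qed
  have LL: "\<And>u. L (L u) = u"
  proof -
    fix u
    have "L (L u) = L u - (L u \<bullet> \<alpha>) *\<^sub>R \<alpha>2" by (simp add: L_def)
    also have "L u \<bullet> \<alpha> = - (u \<bullet> \<alpha>)" using a2 by (simp add: L_def inner_diff_left inner_diff_right inner_commute)
    finally show "L (L u) = u" by (simp add: L_def)
  qed
  have Ldiff: "\<And>u w. L (u - w) = L u - L w"
    by (simp add: L_def inner_diff_left scaleR_diff_left)
  have Linner: "\<And>u w. L u \<bullet> L w = u \<bullet> w"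
  proof -
    fix u w
    have "L u \<bullet> L w = u \<bullet> w - (u \<bullet> \<alpha>) * (w \<bullet> \<alpha>2) - (w \<bullet> \<alpha>) * (u \<bullet> \<alpha>2)
       + (u \<bullet> \<alpha>) * (w \<bullet> \<alpha>) * (\<alpha>2 \<bullet> \<alpha>2)"
      by (simp add: L_def inner_diff_left inner_diff_right inner_commute algebra_simps)
    also have "\<dots> = u \<bullet> w" using aa by (simp add: \<alpha>2_def field_simps)
    finally show "L u \<bullet> L w = u \<bullet> w" .
  qed
  define lam where "lam = (rf \<alpha> m v \<bullet> \<beta> - k) * (2 / (\<beta> \<bullet> \<beta>))"
  have "rf \<alpha> m (rf \<beta> k (rf \<alpha> m v)) = L (rf \<alpha> m v - lam *\<^sub>R \<beta>) + \<mu> *\<^sub>R \<alpha>2"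
    by (simp add: g[symmetric] rf_def lam_def)
  also have "\<dots> = v - lam *\<^sub>R L \<beta>"
    by (simp add: Ldiff Lsc g Ladd La LL)
  also have "lam = (v \<bullet> L \<beta> - (k - c*m)) * (2 / (L \<beta> \<bullet> L \<beta>))"
  proof -
    have "rf \<alpha> m v \<bullet> \<beta> = L v \<bullet> \<beta> + \<mu> * (\<alpha>2 \<bullet> \<beta>)" by (simp add: g inner_add_left)
    also have "L v \<bullet> \<beta> = v \<bullet> L \<beta>" by (metis LL Linner)
    also have "\<mu> * (\<alpha>2 \<bullet> \<beta>) = c * m" by (simp add: \<mu>_def c_def \<alpha>2_def inner_commute)
    finally show ?thesis by (simp add: lam_def Linner)
  qed
  finally show ?thesis by (simp add: rf_def Lb)
qed



definition hp :: "'a::euclidean_space \<Rightarrow> real \<Rightarrow> 'a set" where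
  "hp \<beta> k = {v. v \<bullet> \<beta> = k}"

lemma hyps_hp: "hyps \<Phi> = {hp \<beta> (of_int k) | \<beta> k. \<beta> \<in> \<Phi>}"
  by (simp add: hyps_def hp_def)

lemma rs_nz: "root_system \<Phi> \<Longrightarrow> \<beta> \<in> \<Phi> \<Longrightarrow> \<beta> \<noteq> 0"
  unfolding root_system_def by blast

lemma rs_fin: "root_system \<Phi> \<Longrightarrow> finite \<Phi>"
  unfolding root_system_def by blast

lemma rs_refl: "root_system \<Phi> \<Longrightarrow> \<alpha> \<in> \<Phi> \<Longrightarrow> \<beta> \<in> \<Phi> \<Longrightarrow> \<beta> - (2 * (\<beta> \<bullet> \<alpha>) / (\<alpha> \<bullet> \<alpha>)) *\<^sub>R \<alpha> \<in> \<Phi>"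
  unfolding root_system_def by blast

lemma rs_int: "root_system \<Phi> \<Longrightarrow> \<alpha> \<in> \<Phi> \<Longrightarrow> \<beta> \<in> \<Phi> \<Longrightarrow> 2 * (\<beta> \<bullet> \<alpha>) / (\<alpha> \<bullet> \<alpha>) \<in> \<int>"
  unfolding root_system_def by blast

lemma refls_rf: "refls \<Phi> = {rf \<beta> (of_int k) | \<beta> k. \<beta> \<in> \<Phi>}"
  by (simp add: refls_def aff_refl_rf)

lemma fixH_rf: "\<beta> \<noteq> 0 \<Longrightarrow> fixH (rf \<beta> k) = hp \<beta> k"
  by (simp add: fixH_def hp_def fix_rf)

lemma hp_nonempty: "\<beta> \<noteq> 0 \<Longrightarrow> hp \<beta> k \<noteq> {}"
proof -
  assume b: "\<beta> \<noteq> 0"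
  have "(k / (\<beta> \<bullet> \<beta>)) *\<^sub>R \<beta> \<in> hp \<beta> k" using b by (simp add: hp_def)
  then show ?thesis by blast
qed

lemma hp_par:
  assumes b: "\<beta> \<noteq> 0" and g: "\<gamma> \<noteq> 0" and e: "hp \<gamma> a = hp \<beta> b"
  shows "\<exists>c. c \<noteq> 0 \<and> \<gamma> = c *\<^sub>R \<beta> \<and> a = c * b"
proof -
  have bb: "\<beta> \<bullet> \<beta> \<noteq> 0" using b by simp
  define p0 where "p0 = (b / (\<beta> \<bullet> \<beta>)) *\<^sub>R \<beta>"
  define c where "c = (\<gamma> \<bullet> \<beta>) / (\<beta> \<bullet> \<beta>)"
  define u where "u = \<gamma> - c *\<^sub>R \<beta>"
  have ub: "u \<bullet> \<beta> = 0" using bb by (simp add: u_def c_def inner_diff_left)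
  have "p0 \<in> hp \<beta> b" using bb by (simp add: hp_def p0_def)
  then have p0g: "p0 \<bullet> \<gamma> = a" using e by (simp add: hp_def set_eq_iff)
  have "p0 + u \<in> hp \<beta> b" using bb ub by (simp add: hp_def p0_def inner_add_left)
  then have "(p0 + u) \<bullet> \<gamma> = a" using e by (simp add: hp_def set_eq_iff)
  then have ug: "u \<bullet> \<gamma> = 0" using p0g by (simp add: inner_add_left)
  have "u \<bullet> u = u \<bullet> \<gamma> - c * (u \<bullet> \<beta>)" by (simp add: u_def inner_diff_right)
  then have "u = 0" using ug ub by simp
  then have gc: "\<gamma> = c *\<^sub>R \<beta>" by (simp add: u_def)
  then have "c \<noteq> 0" using g by auto
  moreover have "a = c * b" using p0g gc bb by (simp add: p0_def)
  ultimately show ?thesis using gc by blast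
qed

lemma refls_unique:
  assumes rs: "root_system \<Phi>" and r1: "r1 \<in> refls \<Phi>" and r2: "r2 \<in> refls \<Phi>"
    and e: "fixH r1 = fixH r2"
  shows "r1 = r2"
proof -
  obtain \<beta> k where b: "\<beta> \<in> \<Phi>" "r1 = rf \<beta> (of_int k)" using r1 by (auto simp: refls_rf)
  obtain \<gamma> m where g: "\<gamma> \<in> \<Phi>" "r2 = rf \<gamma> (of_int m)" using r2 by (auto simp: refls_rf)
  have bn: "\<beta> \<noteq> 0" and gn: "\<gamma> \<noteq> 0" using rs b g rs_nz by auto
  have "hp \<gamma> (of_int m) = hp \<beta> (of_int k)" using e b g bn gn by (simp add: fixH_rf)
  then obtain c where "c \<noteq> 0" "\<gamma> = c *\<^sub>R \<beta>" "of_int m = c * of_int k" using hp_par bn gn by blast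
  then show ?thesis using b g by (simp add: rf_scale)
qed

lemma refl_invol: "root_system \<Phi> \<Longrightarrow> r \<in> refls \<Phi> \<Longrightarrow> r \<circ> r = id"
  by (auto simp: refls_rf fun_eq_iff rf_invol dest: rs_nz)

lemma refl_bij: "root_system \<Phi> \<Longrightarrow> r \<in> refls \<Phi> \<Longrightarrow> bij r"
  by (metis o_bij refl_invol)

lemma refl_inv: "root_system \<Phi> \<Longrightarrow> r \<in> refls \<Phi> \<Longrightarrow> inv r = r"
  by (metis inv_unique_comp refl_invol)

lemma refl_conj:
  assumes rs: "root_system \<Phi>" and r: "r \<in> refls \<Phi>" and q: "q \<in> refls \<Phi>"
  shows "r \<circ> q \<circ> r \<in> refls \<Phi>"
proof -
  obtain \<alpha> m where a: "\<alpha> \<in> \<Phi>" "r = rf \<alpha> (of_int m)" using r by (auto simp: refls_rf)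
  obtain \<beta> k where b: "\<beta> \<in> \<Phi>" "q = rf \<beta> (of_int k)" using q by (auto simp: refls_rf)
  define c where "c = 2 * (\<beta> \<bullet> \<alpha>) / (\<alpha> \<bullet> \<alpha>)"
  have cz: "c \<in> \<int>" using rs_int[OF rs a(1) b(1)] by (simp add: c_def)
  then obtain ci where ci: "c = of_int ci" by (auto elim: Ints_cases)
  have an: "\<alpha> \<noteq> 0" and bn: "\<beta> \<noteq> 0" using rs a b rs_nz by auto
  have "r \<circ> q \<circ> r = rf (\<beta> - c *\<^sub>R \<alpha>) (of_int k - c * of_int m)"
    using rf_conj[OF an bn] a b by (auto simp: fun_eq_iff c_def)
  also have "\<dots> = rf (\<beta> - c *\<^sub>R \<alpha>) (of_int (k - ci * m))" by (simp add: ci)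
  finally have "r \<circ> q \<circ> r = rf (\<beta> - c *\<^sub>R \<alpha>) (of_int (k - ci * m))" .
  moreover have "\<beta> - c *\<^sub>R \<alpha> \<in> \<Phi>" using rs_refl[OF rs a(1) b(1)] by (simp add: c_def)
  ultimately show ?thesis unfolding refls_rf by blast
qed

lemma refl_affW: "r \<in> refls \<Phi> \<Longrightarrow> r \<in> affW \<Phi>"
  using affW.affW_step[OF _ affW.affW_id] by fastforce

lemma affW_comp: "w1 \<in> affW \<Phi> \<Longrightarrow> w2 \<in> affW \<Phi> \<Longrightarrow> w1 \<circ> w2 \<in> affW \<Phi>"
  by (induction rule: affW.induct) (auto, metis affW.affW_step comp_assoc)

lemma affW_bij: assumes "root_system \<Phi>" shows "w \<in> affW \<Phi> \<Longrightarrow> bij w"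
proof (induction rule: affW.induct)
  case (affW_step r w)
  show ?case using bij_comp[OF affW_step(3) refl_bij[OF assms affW_step(1)]] .
qed (metis bij_id id_def)

lemma affW_inv: assumes rs: "root_system \<Phi>" shows "w \<in> affW \<Phi> \<Longrightarrow> inv w \<in> affW \<Phi>"
proof (induction rule: affW.induct)
  case affW_id
  then show ?case by (metis affW.affW_id inv_id)
next
  case (affW_step r w)
  have "inv (r \<circ> w) = inv w \<circ> inv r"
    using refl_bij[OF rs affW_step(1)] affW_bij[OF rs affW_step(2)] o_inv_distrib by blast
  also have "\<dots> = inv w \<circ> r" by (simp add: refl_inv[OF rs affW_step(1)])
  finally show ?case using affW_step affW_comp refl_affW by metis
qed

lemma affW_conj: assumes rs: "root_system \<Phi>" and q: "q \<in> refls \<Phi>"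
  shows "w \<in> affW \<Phi> \<Longrightarrow> w \<circ> q \<circ> inv w \<in> refls \<Phi>"
proof (induction rule: affW.induct)
  case affW_id
  then show ?case using q by (simp add: inv_id)
next
  case (affW_step r w)
  have "inv (r \<circ> w) = inv w \<circ> inv r"
    using refl_bij[OF rs affW_step(1)] affW_bij[OF rs affW_step(2)] o_inv_distrib by blast
  also have "\<dots> = inv w \<circ> r" by (simp add: refl_inv[OF rs affW_step(1)])
  finally have "r \<circ> w \<circ> q \<circ> inv (r \<circ> w) = r \<circ> (w \<circ> q \<circ> inv w) \<circ> r" by (simp add: o_assoc)
  then show ?case using affW_step refl_conj rs by metis
qed


lemma fixH_conj: assumes b: "bij w" shows "fixH (w \<circ> q \<circ> inv w) = w ` fixH q"
proof
  show "fixH (w \<circ> q \<circ> inv w) \<subseteq> w ` fixH q"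
  proof
    fix v assume "v \<in> fixH (w \<circ> q \<circ> inv w)"
    then have "w (q (inv w v)) = v" by (simp add: fixH_def)
    then have "q (inv w v) = inv w v" by (metis b bij_inv_eq_iff)
    moreover have "v = w (inv w v)" by (metis b bij_inv_eq_iff)
    ultimately show "v \<in> w ` fixH q" unfolding fixH_def by blast
  qed
  show "w ` fixH q \<subseteq> fixH (w \<circ> q \<circ> inv w)"
  proof
    fix v assume "v \<in> w ` fixH q"
    then obtain u where u: "q u = u" "v = w u" by (auto simp: fixH_def)
    have "inv w v = u" using u b by (simp add: bij_is_inj)
    then show "v \<in> fixH (w \<circ> q \<circ> inv w)" using u by (simp add: fixH_def)
  qed
qed

lemma fixH_refls: assumes rs: "root_system \<Phi>" and r: "r \<in> refls \<Phi>" shows "fixH r \<in> hyps \<Phi>"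
proof -
  obtain \<beta> k where b: "\<beta> \<in> \<Phi>" "r = rf \<beta> (of_int k)" using r by (auto simp: refls_rf)
  then have "fixH r = hp \<beta> (of_int k)" using fixH_rf rs_nz[OF rs] by blast
  then show ?thesis unfolding hyps_hp using b by blast
qed

lemma hyps_refl: assumes rs: "root_system \<Phi>" and H: "H \<in> hyps \<Phi>" shows "\<exists>r\<in>refls \<Phi>. fixH r = H"
proof -
  obtain \<beta> k where b: "\<beta> \<in> \<Phi>" "H = hp \<beta> (of_int k)" using H unfolding hyps_hp by blast
  then have "fixH (rf \<beta> (of_int k)) = H" using fixH_rf rs_nz[OF rs] by blast
  moreover have "rf \<beta> (of_int k) \<in> refls \<Phi>" unfolding refls_rf using b by blast
  ultimately show ?thesis by blast
qed

lemma hyps_img: assumes rs: "root_system \<Phi>" and w: "w \<in> affW \<Phi>" and H: "H \<in> hyps \<Phi>" shows "w ` H \<in> hyps \<Phi>"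
proof -
  obtain r where r: "r \<in> refls \<Phi>" "fixH r = H" using hyps_refl[OF rs H] by blast
  have "w ` H = fixH (w \<circ> r \<circ> inv w)" using fixH_conj[OF affW_bij[OF rs w]] r by simp
  then show ?thesis using fixH_refls[OF rs affW_conj[OF rs r(1) w]] by simp
qed

lemma hyps_hpE:
  assumes rs: "root_system \<Phi>" and H: "H \<in> hyps \<Phi>"
  obtains \<beta> k where "\<beta> \<in> \<Phi>" "\<beta> \<noteq> 0" "H = hp \<beta> (of_int k)"
proof -
  obtain \<beta> k where b: "\<beta> \<in> \<Phi>" "H = hp \<beta> (of_int k)" using H unfolding hyps_hp by blast
  then show ?thesis using that rs_nz[OF rs] by blast
qed

definition affmap :: "('a::euclidean_space \<Rightarrow> 'a) \<Rightarrow> bool" where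
  "affmap w \<longleftrightarrow> (\<exists>L c. linear L \<and> inj L \<and> w = (\<lambda>v. L v + c))"

lemma rf_split: "rf \<beta> k v = rf \<beta> 0 v + (k * (2 / (\<beta> \<bullet> \<beta>))) *\<^sub>R \<beta>"
proof -
  obtain t where t: "t = 2 / (\<beta> \<bullet> \<beta>)" by blast
  have "rf \<beta> k v = v - ((v \<bullet> \<beta>) * t - k * t) *\<^sub>R \<beta>" unfolding rf_def t
    by (simp only: left_diff_distrib)
  also have "\<dots> = (v - ((v \<bullet> \<beta> - 0) * t) *\<^sub>R \<beta>) + (k * t) *\<^sub>R \<beta>"
    by (simp add: scaleR_diff_left)
  finally show ?thesis unfolding rf_def t .
qed

lemma linear_rf0: "linear (rf \<beta> 0)"
proof -
  define b2 where "b2 = (2 / (\<beta> \<bullet> \<beta>)) *\<^sub>R \<beta>"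
  have e: "rf \<beta> 0 = (\<lambda>v. v - (v \<bullet> \<beta>) *\<^sub>R b2)" by (simp add: rf_def b2_def fun_eq_iff mult.commute)
  show ?thesis unfolding e
    by (intro linearI) (simp_all add: inner_add_left scaleR_add_left scaleR_diff_right)
qed

lemma affmap_rf: "\<beta> \<noteq> 0 \<Longrightarrow> affmap (rf \<beta> k)"
  unfolding affmap_def
proof (intro exI conjI)
  assume "\<beta> \<noteq> 0"
  show "linear (rf \<beta> 0)" by (rule linear_rf0)
  show "inj (rf \<beta> 0)" using \<open>\<beta> \<noteq> 0\<close> by (metis injI rf_invol)
  show "rf \<beta> k = (\<lambda>v. rf \<beta> 0 v + (k * (2 / (\<beta> \<bullet> \<beta>))) *\<^sub>R \<beta>)" by (simp add: fun_eq_iff rf_split[of \<beta> k])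
qed

lemma affmap_comp: "affmap f \<Longrightarrow> affmap g \<Longrightarrow> affmap (f \<circ> g)"
  unfolding affmap_def
proof (elim exE conjE)
  fix L c L' c'
  assume "linear L" "inj L" "f = (\<lambda>v. L v + c)" "linear L'" "inj L'" "g = (\<lambda>v. L' v + c')"
  then show "\<exists>L c. linear L \<and> inj L \<and> f \<circ> g = (\<lambda>v. L v + c)"
    by (intro exI[of _ "L \<circ> L'"] exI[of _ "L c' + c"])
       (auto simp: linear_compose inj_compose fun_eq_iff linear_add)
qed

lemma affmap_id: "affmap id"
  unfolding affmap_def by (intro exI[of _ id] exI[of _ 0]) (auto simp: linear_id)

lemma affW_affmap: assumes "root_system \<Phi>" shows "w \<in> affW \<Phi> \<Longrightarrow> affmap w"
proof (induction rule: affW.induct)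
  case (affW_step r w)
  then obtain \<beta> k where "\<beta> \<in> \<Phi>" "r = rf \<beta> (of_int k)" by (auto simp: refls_rf)
  then show ?case using affW_step rs_nz[OF assms] affmap_comp affmap_rf by metis
qed (metis affmap_id id_def)

lemma affmap_cont: "affmap w \<Longrightarrow> continuous_on S w"
proof -
  assume "affmap w"
  then obtain L c where L: "linear L" "w = (\<lambda>v. L v + c)" unfolding affmap_def by blast
  have "continuous_on S L" using L(1) by (simp add: linear_continuous_on linear_linear)
  then show ?thesis unfolding L(2) by (intro continuous_on_add continuous_on_const)
qed

lemma affmap_segment: "affmap w \<Longrightarrow> w ` closed_segment a b = closed_segment (w a) (w b)"
proof -
  assume "affmap w"
  then obtain L c where L: "linear L" "w = (\<lambda>v. L v + c)" unfolding affmap_def by blast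
  have "w ` closed_segment a b = (\<lambda>x. c + x) ` (L ` closed_segment a b)" by (auto simp: L add.commute)
  also have "\<dots> = closed_segment (c + L a) (c + L b)"
    by (simp add: closed_segment_linear_image[OF L(1)] closed_segment_translation)
  finally show ?thesis by (simp add: L add.commute)
qed

lemma affmap_aff_dim: "affmap w \<Longrightarrow> aff_dim (w ` S) = aff_dim S"
proof -
  assume "affmap w"
  then obtain L c where L: "linear L" "inj L" "w = (\<lambda>v. L v + c)" unfolding affmap_def by blast
  have "w ` S = (+) c ` (L ` S)" by (auto simp: L add.commute)
  then show ?thesis by (simp add: aff_dim_translation_eq L)
qed



definition sep :: "'a::euclidean_space set \<Rightarrow> 'a \<Rightarrow> 'a \<Rightarrow> bool" where
  "sep H u v \<longleftrightarrow> u \<notin> H \<and> v \<notin> H \<and> closed_segment u v \<inter> H \<noteq> {}"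

lemma sep_sym: "sep H u v = sep H v u"
  by (auto simp: sep_def closed_segment_commute)

lemma sep_side:
  assumes b: "\<beta> \<noteq> 0" and u: "u \<notin> hp \<beta> k" and v: "v \<notin> hp \<beta> k"
  shows "sep (hp \<beta> k) u v \<longleftrightarrow> ((u \<bullet> \<beta> < k) \<noteq> (v \<bullet> \<beta> < k))"
proof
  assume s: "sep (hp \<beta> k) u v"
  show "(u \<bullet> \<beta> < k) \<noteq> (v \<bullet> \<beta> < k)"
  proof
    assume e: "(u \<bullet> \<beta> < k) = (v \<bullet> \<beta> < k)"
    have uk: "u \<bullet> \<beta> \<noteq> k" and vk: "v \<bullet> \<beta> \<noteq> k" using u v by (auto simp: hp_def)
    show False
    proof (cases "u \<bullet> \<beta> < k")
      case True
      then have "closed_segment u v \<subseteq> {x. inner \<beta> x < k}"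
        using e by (intro closed_segment_subset convex_halfspace_lt) (auto simp: inner_commute)
      then show False using s by (auto simp: sep_def hp_def inner_commute)
    next
      case False
      then have "closed_segment u v \<subseteq> {x. inner \<beta> x > k}"
        using e uk vk by (intro closed_segment_subset convex_halfspace_gt) (auto simp: inner_commute)
      then show False using s by (auto simp: sep_def hp_def inner_commute)
    qed
  qed
next
  assume d: "(u \<bullet> \<beta> < k) \<noteq> (v \<bullet> \<beta> < k)"
  have uk: "u \<bullet> \<beta> \<noteq> k" and vk: "v \<bullet> \<beta> \<noteq> k" using u v by (auto simp: hp_def)
  have c: "connected (closed_segment u v)" by (simp add: convex_connected)
  have "\<exists>z\<in>closed_segment u v. inner \<beta> z = k"
  proof (cases "u \<bullet> \<beta> < k")
    case True
    then have "v \<bullet> \<beta> > k" using d vk by auto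
    then show ?thesis using connected_ivt_hyperplane[OF c, of u v \<beta> k] True
      by (auto simp: inner_commute)
  next
    case False
    then have "v \<bullet> \<beta> < k" "u \<bullet> \<beta> > k" using d uk by auto
    then show ?thesis using connected_ivt_hyperplane[OF c, of v u \<beta> k]
      by (auto simp: inner_commute)
  qed
  then show "sep (hp \<beta> k) u v" using u v by (auto simp: sep_def hp_def inner_commute)
qed

lemma conn_side:
  assumes c: "connected X" and d: "X \<inter> hp \<beta> k = {}"
  shows "(\<forall>x\<in>X. x \<bullet> \<beta> < k) \<or> (\<forall>x\<in>X. x \<bullet> \<beta> > k)"
proof (rule ccontr)
  assume "\<not> ?thesis"
  then obtain x y where xy: "x \<in> X" "y \<in> X" "\<not> x \<bullet> \<beta> < k" "\<not> y \<bullet> \<beta> > k" by auto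
  have "\<exists>z\<in>X. inner \<beta> z = k"
    using connected_ivt_hyperplane[OF c xy(2) xy(1), of \<beta> k] xy by (auto simp: inner_commute)
  then show False using d by (auto simp: hp_def inner_commute)
qed


locale ars =
  fixes \<Phi> :: "'a::euclidean_space set"
  assumes rs: "root_system \<Phi>"
begin

definition Cmp :: "'a set" where "Cmp = - \<Union>(hyps \<Phi>)"

lemma closed_hyps_union: "closed (\<Union>{H \<in> hyps \<Phi>. P H})"
proof -
  define K where "K = (\<lambda>\<beta>. {(of_int k :: real) | k. P (hp \<beta> (of_int k))})"
  have e: "\<Union>{H \<in> hyps \<Phi>. P H} = (\<Union>\<beta>\<in>\<Phi>. (\<lambda>v. v \<bullet> \<beta>) -` K \<beta>)"
    unfolding K_def hyps_hp by (auto simp: hp_def)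
  have "closed ((\<lambda>v. v \<bullet> \<beta>) -` K \<beta>)" for \<beta>
  proof (rule continuous_closed_vimage)
    show "closed (K \<beta>)" unfolding K_def by (rule closed_subset_Ints) auto
    show "\<And>x. continuous (at x) (\<lambda>v. v \<bullet> \<beta>)" by (intro continuous_intros)
  qed
  then show ?thesis unfolding e using rs_fin[OF rs] by (intro closed_UN) auto
qed

lemma open_Cmp: "open Cmp"
  using closed_hyps_union[of "\<lambda>_. True"] unfolding Cmp_def by (simp add: open_Compl)

lemma Cmp_iff: "v \<in> Cmp \<longleftrightarrow> (\<forall>H\<in>hyps \<Phi>. v \<notin> H)"
  by (auto simp: Cmp_def)

lemma open_ccs: "open (connected_component_set Cmp a)"
  by (simp add: open_Cmp open_connected_component)

end

context ars begin
lemma sep_xor: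
  assumes H: "H \<in> hyps \<Phi>" and abc: "a \<notin> H" "b \<notin> H" "c \<notin> H"
  shows "sep H a c = (sep H a b \<noteq> sep H b c)"
proof -
  obtain \<beta> k where b: "\<beta> \<noteq> 0" "H = hp \<beta> (of_int k)" using hyps_hpE[OF rs H] by metis
  show ?thesis using abc unfolding b(2) using sep_side[OF b(1)] by auto
qed

lemma ccs_side:
  assumes H: "H \<in> hyps \<Phi>" and b: "b \<in> connected_component_set Cmp a"
  shows "\<not> sep H a b"
proof -
  obtain \<beta> k where bk: "\<beta> \<noteq> 0" "H = hp \<beta> (of_int k)" using hyps_hpE[OF rs H] by metis
  have aC: "a \<in> Cmp" using b connected_component_in by (metis mem_Collect_eq)
  then have a: "a \<in> connected_component_set Cmp a"
    by (simp add: connected_component_refl_eq)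
  have d: "connected_component_set Cmp a \<inter> H = {}"
    using connected_component_subset[of Cmp a] H by (auto simp: Cmp_def)
  have aH: "a \<notin> H" "b \<notin> H" using a b d by blast+
  have "(a \<bullet> \<beta> < of_int k) = (b \<bullet> \<beta> < of_int k)"
    using conn_side[OF connected_connected_component d[unfolded bk(2)]]
  proof
    assume "\<forall>x\<in>connected_component_set Cmp a. x \<bullet> \<beta> < of_int k"
    then show ?thesis using a b by simp
  next
    assume h: "\<forall>x\<in>connected_component_set Cmp a. x \<bullet> \<beta> > of_int k"
    then have "a \<bullet> \<beta> > of_int k" "b \<bullet> \<beta> > of_int k" using a b by auto
    then show ?thesis by auto
  qed
  then show ?thesis using aH unfolding bk(2) by (simp add: sep_side[OF bk(1)])
qed

lemma nosep_ccs:
  assumes a: "a \<in> Cmp" and b: "b \<in> Cmp" and n: "\<forall>H\<in>hyps \<Phi>. \<not> sep H a b"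
  shows "b \<in> connected_component_set Cmp a"
proof -
  have "closed_segment a b \<subseteq> Cmp"
  proof
    fix z assume z: "z \<in> closed_segment a b"
    have "z \<notin> H" if H: "H \<in> hyps \<Phi>" for H
    proof
      assume zH: "z \<in> H"
      have "a \<notin> H" "b \<notin> H" using a b H by (auto simp: Cmp_iff)
      then have "sep H a b" using z zH unfolding sep_def by blast
      then show False using n H by blast
    qed
    then show "z \<in> Cmp" by (simp add: Cmp_iff)
  qed
  then have "closed_segment a b \<subseteq> connected_component_set Cmp a"
    by (intro connected_component_maximal) (auto simp: convex_connected)
  then show ?thesis by auto
qed

end

context ars begin
lemma affW_Cmp:
  assumes w: "w \<in> affW \<Phi>" and v: "v \<in> Cmp"
  shows "w v \<in> Cmp"
proof -
  have "w v \<notin> H" if H: "H \<in> hyps \<Phi>" for H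
  proof
    assume "w v \<in> H"
    then have "inv w (w v) \<in> inv w ` H" by blast
    then have "v \<in> inv w ` H" using affW_bij[OF rs w] by (simp add: bij_is_inj)
    moreover have "inv w ` H \<in> hyps \<Phi>" using hyps_img[OF rs affW_inv[OF rs w] H] .
    ultimately show False using v by (auto simp: Cmp_def)
  qed
  then show ?thesis by (simp add: Cmp_iff)
qed

lemma sep_affW:
  assumes w: "w \<in> affW \<Phi>"
  shows "sep (w ` H) (w u) (w v) = sep H u v"
proof -
  have i: "inj w" using affW_bij[OF rs w] bij_is_inj by blast
  have s: "w ` closed_segment u v = closed_segment (w u) (w v)"
    using affmap_segment[OF affW_affmap[OF rs w]] .
  have "closed_segment (w u) (w v) \<inter> w ` H = w ` (closed_segment u v \<inter> H)"
    using s i by (simp add: image_Int)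
  then show ?thesis unfolding sep_def using i by (auto simp: inj_image_mem_iff)
qed

lemma ccs_img:
  assumes w: "w \<in> affW \<Phi>" and a: "a \<in> Cmp"
  shows "w ` connected_component_set Cmp a = connected_component_set Cmp (w a)"
proof
  have cw: "continuous_on X w" for X using affmap_cont[OF affW_affmap[OF rs w]] .
  have iw: "inv w \<in> affW \<Phi>" using affW_inv[OF rs w] .
  have cwi: "continuous_on X (inv w)" for X using affmap_cont[OF affW_affmap[OF rs iw]] .
  have sub: "\<And>u a. u \<in> affW \<Phi> \<Longrightarrow> a \<in> Cmp \<Longrightarrow>
      u ` connected_component_set Cmp a \<subseteq> connected_component_set Cmp (u a)"
  proof -
    fix u a assume u: "u \<in> affW \<Phi>" and a: "a \<in> Cmp"
    show "u ` connected_component_set Cmp a \<subseteq> connected_component_set Cmp (u a)"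
    proof (rule connected_component_maximal)
      show "u a \<in> u ` connected_component_set Cmp a" using a
        by (simp add: connected_component_refl_eq)
      show "connected (u ` connected_component_set Cmp a)"
        using affmap_cont[OF affW_affmap[OF rs u]]
        by (intro connected_continuous_image) auto
      show "u ` connected_component_set Cmp a \<subseteq> Cmp"
        using connected_component_subset affW_Cmp[OF u] by blast
    qed
  qed
  show "w ` connected_component_set Cmp a \<subseteq> connected_component_set Cmp (w a)" using sub[OF w a] .
  have "inv w ` connected_component_set Cmp (w a) \<subseteq> connected_component_set Cmp (inv w (w a))"
    using sub[OF iw affW_Cmp[OF w a]] .
  also have "inv w (w a) = a" using affW_bij[OF rs w] by (simp add: bij_is_inj)
  finally have "w ` inv w ` connected_component_set Cmp (w a) \<subseteq> w ` connected_component_set Cmp a"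
    by blast
  moreover have "w ` inv w ` X = X" for X using affW_bij[OF rs w]
    by (simp add: image_image surj_f_inv_f[OF bij_is_surj])
  ultimately show "connected_component_set Cmp (w a) \<subseteq> w ` connected_component_set Cmp a" by simp
qed

lemma refl_sep:
  assumes t: "t \<in> refls \<Phi>" and a: "a \<notin> fixH t"
  shows "sep (fixH t) a (t a)"
proof -
  obtain \<beta> k where b: "\<beta> \<in> \<Phi>" "t = rf \<beta> (of_int k)" using t by (auto simp: refls_rf)
  have bn: "\<beta> \<noteq> 0" using rs_nz[OF rs b(1)] .
  have F: "fixH t = hp \<beta> (of_int k)" using b bn fixH_rf by blast
  have ak: "a \<bullet> \<beta> \<noteq> of_int k" using a F by (auto simp: hp_def)
  have ta: "t a \<bullet> \<beta> = 2 * of_int k - a \<bullet> \<beta>" using b rf_inner[OF bn] by simp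
  have tak: "t a \<notin> hp \<beta> (of_int k)" using ak ta by (auto simp: hp_def)
  have a': "a \<notin> hp \<beta> (of_int k)" using a F by simp
  have "(a \<bullet> \<beta> < of_int k) \<noteq> (t a \<bullet> \<beta> < of_int k)" using ak ta by linarith
  then show ?thesis unfolding F using sep_side[OF bn a' tak] by simp
qed

end


lemma hp_eq: "hp \<beta> k = {x. \<beta> \<bullet> x = k}"
  by (auto simp: hp_def inner_commute)

lemma affine_hp: "affine (hp \<beta> k)"
  unfolding hp_eq by (rule affine_hyperplane)

lemma aff_dim_hp: "\<beta> \<noteq> 0 \<Longrightarrow> aff_dim (hp \<beta> k) = int DIM('a) - 1" for \<beta> :: "'a::euclidean_space"
  unfolding hp_eq by simp

lemma closure_side:
  assumes c: "connected X" and d: "X \<inter> hp \<gamma> m = {}" and x0: "x0 \<in> X" and f: "f \<in> closure X"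
  shows "(x0 \<bullet> \<gamma> < m \<longrightarrow> f \<bullet> \<gamma> \<le> m) \<and> (x0 \<bullet> \<gamma> > m \<longrightarrow> f \<bullet> \<gamma> \<ge> m)"
proof -
  have s: "(\<forall>x\<in>X. x \<bullet> \<gamma> < m) \<or> (\<forall>x\<in>X. x \<bullet> \<gamma> > m)" using conn_side[OF c d] .
  show ?thesis
  proof (intro conjI impI)
    assume "x0 \<bullet> \<gamma> < m"
    then have "X \<subseteq> {x. inner \<gamma> x \<le> m}" using s x0 by (force simp: inner_commute)
    then have "closure X \<subseteq> {x. inner \<gamma> x \<le> m}" by (intro closure_minimal closed_halfspace_le)
    then show "f \<bullet> \<gamma> \<le> m" using f by (auto simp: inner_commute)
  next
    assume "x0 \<bullet> \<gamma> > m"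
    then have "X \<subseteq> {x. inner \<gamma> x \<ge> m}" using s x0 by (force simp: inner_commute)
    then have "closure X \<subseteq> {x. inner \<gamma> x \<ge> m}" by (intro closure_minimal closed_halfspace_ge)
    then show "f \<bullet> \<gamma> \<ge> m" using f by (auto simp: inner_commute)
  qed
qed

context ars begin

lemma hyps_aff_dim: "H \<in> hyps \<Phi> \<Longrightarrow> aff_dim H = int DIM('a) - 1"
  by (metis aff_dim_hp hyps_hpE rs)

lemma hyps_affine: "H \<in> hyps \<Phi> \<Longrightarrow> affine H"
  by (metis affine_hp hyps_hpE rs)

lemma hyps_ne: "H \<in> hyps \<Phi> \<Longrightarrow> H \<noteq> {}"
  by (metis hp_nonempty hyps_hpE rs)

lemma hyps_Int_small:
  assumes H: "H \<in> hyps \<Phi>" and H': "H' \<in> hyps \<Phi>" and ne: "H' \<noteq> H"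
  shows "aff_dim (H \<inter> H') < int DIM('a) - 1"
proof -
  have "\<not> H \<subseteq> H'"
  proof
    assume "H \<subseteq> H'"
    then have "H = H'" using affine_dim_equal[OF hyps_affine[OF H] hyps_affine[OF H'] hyps_ne[OF H]]
      hyps_aff_dim[OF H] hyps_aff_dim[OF H'] by simp
    then show False using ne by simp
  qed
  then have ps: "H \<inter> H' \<subset> H" by blast
  have e1: "affine hull (H \<inter> H') = H \<inter> H'"
    using hyps_affine[OF H] hyps_affine[OF H'] by (simp add: affine_Int affine_hull_eq)
  have e2: "affine hull H = H" using hyps_affine[OF H] by (simp add: affine_hull_eq)
  have "affine hull (H \<inter> H') \<subset> affine hull H" using ps by (subst e1, subst e2)
  then have "aff_dim (H \<inter> H') < aff_dim H" by (rule aff_dim_psubset)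
  then show ?thesis using hyps_aff_dim[OF H] by simp
qed

lemma Cmp_not_in: "a \<in> Cmp \<Longrightarrow> H \<in> hyps \<Phi> \<Longrightarrow> a \<notin> H"
  by (auto simp: Cmp_iff)

lemma ccs_Cmp: "b \<in> connected_component_set Cmp a \<Longrightarrow> b \<in> Cmp"
  using connected_component_subset by blast

lemma adjacent:
  assumes a: "a \<in> Cmp" and t: "t \<in> refls \<Phi>"
    and wall: "aff_dim (closure (connected_component_set Cmp a) \<inter> fixH t) \<ge> int DIM('a) - 1"
    and H': "H' \<in> hyps \<Phi>"
  shows "sep H' a (t a) \<longleftrightarrow> H' = fixH t"
proof
  assume "H' = fixH t"
  then show "sep H' a (t a)" using refl_sep[OF t] Cmp_not_in[OF a fixH_refls[OF rs t]] by simp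
next
  assume s: "sep H' a (t a)"
  obtain \<gamma> m where g: "\<gamma> \<noteq> 0" "H' = hp \<gamma> (of_int m)" using hyps_hpE[OF rs H'] by metis
  define A where "A = connected_component_set Cmp a"
  have tW: "t \<in> affW \<Phi>" using refl_affW[OF t] .
  have ta: "t a \<in> Cmp" using affW_Cmp[OF tW a] .
  have tA: "t ` A = connected_component_set Cmp (t a)" unfolding A_def using ccs_img[OF tW a] .
  have aA: "a \<in> A" and taA: "t a \<in> t ` A" using a by (auto simp: A_def connected_component_refl_eq)
  have dA: "A \<inter> H' = {}" using H' connected_component_subset unfolding A_def Cmp_def by blast
  have dtA: "t ` A \<inter> H' = {}" using H' connected_component_subset unfolding tA Cmp_def by blast
  have cA: "connected A" unfolding A_def by simp
  have ctA: "connected (t ` A)" unfolding tA by simp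
  have sides: "(a \<bullet> \<gamma> < of_int m) \<noteq> (t a \<bullet> \<gamma> < of_int m)"
    using s sep_side[OF g(1)] Cmp_not_in[OF a H'] Cmp_not_in[OF ta H'] unfolding g(2) by blast
  have an: "a \<bullet> \<gamma> \<noteq> of_int m" "t a \<bullet> \<gamma> \<noteq> of_int m"
    using Cmp_not_in[OF a H'] Cmp_not_in[OF ta H'] g(2) by (auto simp: hp_def)
  have sub: "closure A \<inter> fixH t \<subseteq> fixH t \<inter> H'"
  proof
    fix f assume f: "f \<in> closure A \<inter> fixH t"
    have tf: "t f = f" using f by (simp add: fixH_def)
    have "t ` closure A \<subseteq> closure (t ` A)"
      by (rule image_closure_subset) (auto intro: affmap_cont[OF affW_affmap[OF rs tW]] closure_subset[of "t ` A", THEN subsetD])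
    then have f2: "f \<in> closure (t ` A)" using f tf by force
    note c1 = closure_side[OF cA dA[unfolded g(2)] aA, of f]
    note c2 = closure_side[OF ctA dtA[unfolded g(2)] taA f2]
    have "f \<bullet> \<gamma> = of_int m" using c1 c2 f sides an by (auto simp: not_less)
    then show "f \<in> fixH t \<inter> H'" using f g(2) by (simp add: hp_def)
  qed
  show "H' = fixH t"
  proof (rule ccontr)
    assume ne: "H' \<noteq> fixH t"
    have "aff_dim (closure A \<inter> fixH t) \<le> aff_dim (fixH t \<inter> H')" using sub by (rule aff_dim_subset)
    also have "\<dots> < int DIM('a) - 1" using hyps_Int_small[OF fixH_refls[OF rs t] H' ne] .
    finally show False using wall unfolding A_def by simp
  qed
qed

end


context ars begin

lemma isolated:
  assumes only: "\<forall>H'\<in>hyps \<Phi>. p \<in> H' \<longrightarrow> H' = H"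
  shows "\<exists>\<epsilon>>0. \<forall>H'\<in>hyps \<Phi>. H' \<noteq> H \<longrightarrow> ball p \<epsilon> \<inter> H' = {}"
proof -
  define U where "U = \<Union>{H' \<in> hyps \<Phi>. H' \<noteq> H}"
  have "closed U" unfolding U_def by (rule closed_hyps_union)
  then have o: "open (- U)" by (simp add: open_Compl)
  have "p \<in> - U" using only unfolding U_def by blast
  then obtain \<epsilon> where e: "\<epsilon> > 0" "ball p \<epsilon> \<subseteq> - U" using o open_contains_ball by blast
  then show ?thesis unfolding U_def by blast
qed

lemma wall_at:
  assumes H: "H \<in> hyps \<Phi>" and p: "p \<in> H" and only: "\<forall>H'\<in>hyps \<Phi>. p \<in> H' \<longrightarrow> H' = H"
  shows "\<exists>\<epsilon>>0. \<forall>q\<in>ball p \<epsilon>. q \<notin> H \<longrightarrow> q \<in> Cmp \<and>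
            aff_dim (closure (connected_component_set Cmp q) \<inter> H) = int DIM('a) - 1"
proof -
  obtain \<epsilon> where e: "\<epsilon> > 0" "\<forall>H'\<in>hyps \<Phi>. H' \<noteq> H \<longrightarrow> ball p \<epsilon> \<inter> H' = {}"
    using isolated[OF only] by blast
  obtain \<beta> k where b: "\<beta> \<noteq> 0" "H = hp \<beta> (of_int k)" using hyps_hpE[OF rs H] by metis
  have nb: "norm \<beta> > 0" using b by simp
  have ballC: "x \<in> Cmp" if "x \<in> ball p \<epsilon>" "x \<notin> H" for x
    using e(2) that unfolding Cmp_iff by blast
  show ?thesis
  proof (intro exI[of _ \<epsilon>] conjI ballI impI)
    show "\<epsilon> > 0" by fact
    fix q assume q: "q \<in> ball p \<epsilon>" "q \<notin> H"
    show "q \<in> Cmp" using ballC q by blast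
    define \<sigma> :: real where "\<sigma> = (if q \<bullet> \<beta> > of_int k then 1 else -1)"
    have s2: "\<sigma> * \<sigma> = 1" by (simp add: \<sigma>_def)
    have qk: "q \<bullet> \<beta> \<noteq> of_int k" using q b by (auto simp: hp_def)
    define B where "B = ball p \<epsilon> \<inter> {x. inner (\<sigma> *\<^sub>R \<beta>) x > \<sigma> * of_int k}"
    have qB: "q \<in> B" using q qk by (auto simp: B_def \<sigma>_def inner_commute)
    have BC: "B \<subseteq> Cmp"
    proof
      fix x assume x: "x \<in> B"
      have "x \<notin> H"
      proof
        assume "x \<in> H"
        then have "x \<bullet> \<beta> = of_int k" using b by (simp add: hp_def)
        then show False using x by (simp add: B_def inner_commute)
      qed
      then show "x \<in> Cmp" using ballC x by (auto simp: B_def)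
    qed
    have "convex B" unfolding B_def by (intro convex_Int convex_ball convex_halfspace_gt)
    then have Bq: "B \<subseteq> connected_component_set Cmp q"
      using qB BC by (intro connected_component_maximal) (auto simp: convex_connected)
    define e where "e = (\<sigma> * \<epsilon> / (4 * norm \<beta>)) *\<^sub>R \<beta>"
    have ne: "norm e = \<epsilon> / 4" using nb e(1) by (simp add: e_def \<sigma>_def)
    have ie: "inner (\<sigma> *\<^sub>R \<beta>) e = \<epsilon> * norm \<beta> / 4"
      using nb s2 by (simp add: e_def power2_norm_eq_inner[symmetric] power2_eq_square field_simps)
    have sub: "H \<inter> ball p (\<epsilon>/2) \<subseteq> closure (connected_component_set Cmp q) \<inter> H"
    proof
      fix z assume z: "z \<in> H \<inter> ball p (\<epsilon>/2)"
      have zk: "inner (\<sigma> *\<^sub>R \<beta>) z = \<sigma> * of_int k" using z b by (simp add: hp_def inner_commute)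
      have zz: "z \<noteq> z + e" using ne e(1) by auto
      have "open_segment z (z + e) \<subseteq> B"
      proof
        fix w assume "w \<in> open_segment z (z + e)"
        then obtain u where u: "0 < u" "u < 1" "w = (1 - u) *\<^sub>R z + u *\<^sub>R (z + e)"
          by (auto simp: in_segment)
        have w: "w = z + u *\<^sub>R e" using u(3) by (simp add: algebra_simps)
        have "dist p w \<le> dist p z + norm (u *\<^sub>R e)" unfolding w dist_norm
          using norm_triangle_ineq4[of "p - z" "u *\<^sub>R e"] by (simp add: algebra_simps)
        also have "\<dots> < \<epsilon>/2 + \<epsilon>/4"
        proof -
          have "u * norm e \<le> norm e" using u by (intro mult_left_le_one_le) auto
          moreover have "dist p z < \<epsilon>/2" using z by simp
          moreover have "norm (u *\<^sub>R e) = u * norm e" using u by simp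
          ultimately show ?thesis using ne by linarith
        qed
        also have "\<dots> < \<epsilon>" using e(1) by simp
        finally have wb: "w \<in> ball p \<epsilon>" by simp
        have "inner (\<sigma> *\<^sub>R \<beta>) w = \<sigma> * of_int k + u * (\<epsilon> * norm \<beta> / 4)"
        proof -
          have "inner (\<sigma> *\<^sub>R \<beta>) w = inner (\<sigma> *\<^sub>R \<beta>) z + u * inner (\<sigma> *\<^sub>R \<beta>) e"
            unfolding w by (simp only: inner_add_right inner_scaleR_right)
          then show ?thesis unfolding zk ie .
        qed
        moreover have "u * (\<epsilon> * norm \<beta> / 4) > 0" using u nb e(1) by simp
        ultimately show "w \<in> B" using wb by (simp add: B_def)
      qed
      then have "closure (open_segment z (z + e)) \<subseteq> closure (connected_component_set Cmp q)"
        using Bq by (intro closure_mono) blast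
      moreover have "z \<in> closure (open_segment z (z + e))" using zz by simp
      ultimately show "z \<in> closure (connected_component_set Cmp q) \<inter> H" using z by blast
    qed
    have "aff_dim (H \<inter> ball p (\<epsilon>/2)) = aff_dim H"
      using hyps_affine[OF H] p e(1) by (intro aff_dim_convex_Int_open) (auto simp: affine_imp_convex)
    then have "aff_dim (closure (connected_component_set Cmp q) \<inter> H) \<ge> int DIM('a) - 1"
      using aff_dim_subset[OF sub] hyps_aff_dim[OF H] by simp
    moreover have "aff_dim (closure (connected_component_set Cmp q) \<inter> H) \<le> int DIM('a) - 1"
      using aff_dim_subset[of "closure (connected_component_set Cmp q) \<inter> H" H] hyps_aff_dim[OF H] by auto
    ultimately show "aff_dim (closure (connected_component_set Cmp q) \<inter> H) = int DIM('a) - 1" by simp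
  qed
qed

end


context ars begin

lemma generic:
  assumes a0: "a0 \<in> Cmp" and X: "open X" "X \<noteq> {}"
  shows "\<exists>a\<in>X. \<forall>H\<in>hyps \<Phi>. \<forall>H'\<in>hyps \<Phi>. H \<noteq> H' \<longrightarrow> closed_segment a0 a \<inter> H \<inter> H' = {}"
proof -
  define Bad :: "'a \<times> int \<times> 'a \<times> int \<Rightarrow> 'a set" where
    "Bad = (\<lambda>(\<beta>, k, \<gamma>, m). {v. hp \<beta> (of_int k) \<noteq> hp \<gamma> (of_int m) \<and>
        ((a0 \<bullet> \<gamma> - of_int m) *\<^sub>R \<beta> - (a0 \<bullet> \<beta> - of_int k) *\<^sub>R \<gamma>) \<bullet> v
          = (a0 \<bullet> \<gamma> - of_int m) * of_int k - (a0 \<bullet> \<beta> - of_int k) * of_int m})"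
  define F where "F = Bad ` (\<Phi> \<times> UNIV \<times> \<Phi> \<times> UNIV)"
  have cF: "countable F" unfolding F_def using rs_fin[OF rs]
    by (intro countable_image countable_SIGMA) (auto intro: countable_finite)
  have nF: "negligible S" if S: "S \<in> F" for S
  proof -
    obtain \<beta> k \<gamma> m where bg: "\<beta> \<in> \<Phi>" "\<gamma> \<in> \<Phi>" "S = Bad (\<beta>, k, \<gamma>, m)" using S unfolding F_def by auto
    define c1 where "c1 = a0 \<bullet> \<beta> - of_int k"
    define c2 where "c2 = a0 \<bullet> \<gamma> - of_int m"
    show ?thesis
    proof (cases "hp \<beta> (of_int k) = hp \<gamma> (of_int m)")
      case True
      then show ?thesis using bg by (simp add: Bad_def)
    next
      case False
      have c1: "c1 \<noteq> 0" using Cmp_not_in[OF a0, of "hp \<beta> (of_int k)"] bg unfolding hyps_hp c1_def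
        by (auto simp: hp_def)
      have c2: "c2 \<noteq> 0" using Cmp_not_in[OF a0, of "hp \<gamma> (of_int m)"] bg unfolding hyps_hp c2_def
        by (auto simp: hp_def)
      have "c2 *\<^sub>R \<beta> - c1 *\<^sub>R \<gamma> \<noteq> 0"
      proof
        assume z: "c2 *\<^sub>R \<beta> - c1 *\<^sub>R \<gamma> = 0"
        then have z': "c2 *\<^sub>R \<beta> = c1 *\<^sub>R \<gamma>" by simp
        have iv: "c2 * (v \<bullet> \<beta>) = c1 * (v \<bullet> \<gamma>)" for v
          using arg_cong[OF z', of "\<lambda>x. v \<bullet> x"] by simp
        have "c2 * of_int k = c1 * of_int m"
          using iv[of a0] unfolding c1_def c2_def by (simp add: algebra_simps)
        then have "hp \<beta> (of_int k) = hp \<gamma> (of_int m)"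
          using iv c1 c2 unfolding hp_def by (auto, metis mult_left_cancel)+
        then show False using False by simp
      qed
      then have "negligible {v. (c2 *\<^sub>R \<beta> - c1 *\<^sub>R \<gamma>) \<bullet> v = c2 * of_int k - c1 * of_int m}"
        by (intro negligible_hyperplane) simp
      then show ?thesis using bg False by (simp add: Bad_def c1_def c2_def)
    qed
  qed
  have "negligible (\<Union>F)" using cF nF by (rule negligible_countable_Union)
  moreover have "\<not> negligible X" using open_not_negligible[OF X] .
  ultimately have "\<not> X \<subseteq> \<Union>F" using negligible_subset by blast
  then obtain a where a: "a \<in> X" "a \<notin> \<Union>F" by blast
  have "closed_segment a0 a \<inter> H \<inter> H' = {}"
    if H: "H \<in> hyps \<Phi>" and H': "H' \<in> hyps \<Phi>" and ne: "H \<noteq> H'" for H H'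
  proof (rule ccontr)
    assume "closed_segment a0 a \<inter> H \<inter> H' \<noteq> {}"
    then obtain z where z: "z \<in> closed_segment a0 a" "z \<in> H" "z \<in> H'" by blast
    obtain \<beta> k where b: "\<beta> \<in> \<Phi>" "H = hp \<beta> (of_int k)" using H unfolding hyps_hp by blast
    obtain \<gamma> m where g: "\<gamma> \<in> \<Phi>" "H' = hp \<gamma> (of_int m)" using H' unfolding hyps_hp by blast
    define c1 where "c1 = a0 \<bullet> \<beta> - of_int k"
    define c2 where "c2 = a0 \<bullet> \<gamma> - of_int m"
    define f where "f = (\<lambda>v. c2 * (v \<bullet> \<beta> - of_int k) - c1 * (v \<bullet> \<gamma> - of_int m))"
    obtain u where u: "0 \<le> u" "u \<le> 1" "z = (1 - u) *\<^sub>R a0 + u *\<^sub>R a" using z(1) by (auto simp: in_segment)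
    have fz: "f z = 0" using z b g by (simp add: f_def hp_def)
    have fa0: "f a0 = 0" by (simp add: f_def c1_def c2_def algebra_simps)
    have "f z = (1 - u) * f a0 + u * f a"
      unfolding u(3) f_def by (simp add: inner_add_left algebra_simps)
    then have ufa: "u * f a = 0" using fz fa0 by simp
    have "u \<noteq> 0"
    proof
      assume "u = 0"
      then have "z = a0" using u by simp
      then show False using z(2) Cmp_not_in[OF a0 H] by simp
    qed
    then have "f a = 0" using ufa by simp
    then have "a \<in> Bad (\<beta>, k, \<gamma>, m)" using ne b g
      by (simp add: Bad_def f_def c1_def c2_def inner_diff_left algebra_simps inner_commute)
    moreover have "Bad (\<beta>, k, \<gamma>, m) \<in> F" using b g unfolding F_def by auto
    ultimately show False using a by blast
  qed
  then show ?thesis using a by blast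
qed

end


context ars begin

lemma first_wall:
  assumes a0: "a0 \<in> Cmp" and a: "a \<in> Cmp"
    and gen: "\<forall>H\<in>hyps \<Phi>. \<forall>H'\<in>hyps \<Phi>. H \<noteq> H' \<longrightarrow> closed_segment a0 a \<inter> H \<inter> H' = {}"
    and ns: "\<exists>H\<in>hyps \<Phi>. sep H a0 a"
  shows "\<exists>H\<in>hyps \<Phi>. sep H a0 a \<and>
           aff_dim (closure (connected_component_set Cmp a) \<inter> H) = int DIM('a) - 1"
proof -
  define S where "S = closed_segment a a0 \<inter> \<Union>(hyps \<Phi>)"
  have cS: "closed S" unfolding S_def using closed_hyps_union[of "\<lambda>_. True"] by (intro closed_Int) auto
  have neS: "S \<noteq> {}" using ns unfolding S_def sep_def by (auto simp: closed_segment_commute)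
  obtain p where p: "p \<in> S" and pmin: "\<And>y. y \<in> S \<Longrightarrow> dist a p \<le> dist a y"
    using distance_attains_inf[OF cS neS] by blast
  obtain H0 where H0: "H0 \<in> hyps \<Phi>" "p \<in> H0" using p unfolding S_def by blast
  have pseg: "p \<in> closed_segment a0 a" using p unfolding S_def by (simp add: closed_segment_commute)
  have only: "\<forall>H'\<in>hyps \<Phi>. p \<in> H' \<longrightarrow> H' = H0" using gen H0 pseg by blast
  obtain \<epsilon> where e: "\<epsilon> > 0" and ew: "\<forall>q\<in>ball p \<epsilon>. q \<notin> H0 \<longrightarrow> q \<in> Cmp \<and>
            aff_dim (closure (connected_component_set Cmp q) \<inter> H0) = int DIM('a) - 1"
    using wall_at[OF H0 only] by blast
  have ap: "a \<noteq> p" using a H0 Cmp_not_in by blast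
  then have dap: "dist a p > 0" by simp
  define \<tau> where "\<tau> = min (1/2) (\<epsilon> / (2 * dist a p))"
  have \<tau>: "0 < \<tau>" "\<tau> \<le> 1/2" "\<tau> * dist a p \<le> \<epsilon> / 2"
    using e dap by (auto simp: \<tau>_def min_def field_simps)
  define q where "q = p + \<tau> *\<^sub>R (a - p)"
  have dpq: "dist p q = \<tau> * dist a p" using \<tau> by (simp add: q_def dist_norm dist_commute)
  have qball: "q \<in> ball p \<epsilon>" using dpq \<tau> e by simp
  have daq: "dist a q = (1 - \<tau>) * dist a p"
  proof -
    have "a - q = (1 - \<tau>) *\<^sub>R (a - p)" by (simp add: q_def algebra_simps)
    then show ?thesis using \<tau> by (simp add: dist_norm)
  qed
  have qseg: "q \<in> closed_segment a p"
    unfolding in_segment using \<tau> by (intro exI[of _ "1 - \<tau>"]) (auto simp: q_def algebra_simps)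
  have pseg2: "p \<in> closed_segment a a0" using p unfolding S_def by simp
  have sub1: "closed_segment a q \<subseteq> closed_segment a a0"
  proof -
    have "closed_segment a p \<subseteq> closed_segment a a0"
      using pseg2 by (intro closed_segment_subset) auto
    moreover have "closed_segment a q \<subseteq> closed_segment a p"
      using qseg by (intro closed_segment_subset) auto
    ultimately show ?thesis by blast
  qed
  have segC: "closed_segment a q \<subseteq> Cmp"
  proof
    fix y assume y: "y \<in> closed_segment a q"
    have "dist a y \<le> dist a q" using dist_in_closed_segment[OF y] by (simp add: dist_commute)
    also have "\<dots> < dist a p" using daq \<tau> dap by simp
    finally have "dist a y < dist a p" .
    then have "y \<notin> S" using pmin by force
    then show "y \<in> Cmp" using sub1 y unfolding S_def Cmp_def by blast
  qed
  then have "closed_segment a q \<subseteq> connected_component_set Cmp a"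
    using a by (intro connected_component_maximal) (auto simp: convex_connected)
  then have qa: "q \<in> connected_component_set Cmp a" by auto
  then have eqc: "connected_component_set Cmp q = connected_component_set Cmp a"
    by (rule connected_component_eq)
  have qH: "q \<notin> H0" using segC H0 Cmp_not_in by auto
  have "aff_dim (closure (connected_component_set Cmp a) \<inter> H0) = int DIM('a) - 1"
    using ew qball qH eqc by auto
  moreover have "sep H0 a0 a"
    unfolding sep_def using Cmp_not_in[OF a0 H0(1)] Cmp_not_in[OF a H0(1)] pseg H0 by blast
  ultimately show ?thesis using H0 by blast
qed

lemma exists_wall:
  assumes a0: "a0 \<in> Cmp" and H: "H \<in> hyps \<Phi>"
  shows "\<exists>q\<in>Cmp. aff_dim (closure (connected_component_set Cmp q) \<inter> H) = int DIM('a) - 1"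
proof -
  obtain t where t: "t \<in> refls \<Phi>" "fixH t = H" using hyps_refl[OF rs H] by blast
  have ta0: "t a0 \<in> Cmp" using affW_Cmp[OF refl_affW[OF t(1)] a0] .
  have "connected_component_set Cmp (t a0) \<noteq> {}" using ta0 by (metis connected_component_refl_eq empty_iff mem_Collect_eq)
  then have "\<exists>a\<in>connected_component_set Cmp (t a0). \<forall>H\<in>hyps \<Phi>. \<forall>H'\<in>hyps \<Phi>. H \<noteq> H' \<longrightarrow> closed_segment a0 a \<inter> H \<inter> H' = {}"
    by (rule generic[OF a0 open_ccs])
  then obtain a where a: "a \<in> connected_component_set Cmp (t a0)"
    and gen: "\<forall>H\<in>hyps \<Phi>. \<forall>H'\<in>hyps \<Phi>. H \<noteq> H' \<longrightarrow> closed_segment a0 a \<inter> H \<inter> H' = {}"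
    by blast
  have aC: "a \<in> Cmp" using a ccs_Cmp by blast
  have s1: "sep H a0 (t a0)" using refl_sep[OF t(1)] Cmp_not_in[OF a0 H] t(2) by simp
  have s2: "\<not> sep H (t a0) a" using ccs_side[OF H a] .
  have "sep H a0 a" using sep_xor[OF H Cmp_not_in[OF a0 H] Cmp_not_in[OF ta0 H] Cmp_not_in[OF aC H]] s1 s2
    by simp
  then obtain p where p: "p \<in> closed_segment a0 a" "p \<in> H" unfolding sep_def by blast
  have only: "\<forall>H'\<in>hyps \<Phi>. p \<in> H' \<longrightarrow> H' = H" using gen H p by blast
  obtain \<epsilon> where e: "\<epsilon> > 0" and ew: "\<forall>q\<in>ball p \<epsilon>. q \<notin> H \<longrightarrow> q \<in> Cmp \<and>
            aff_dim (closure (connected_component_set Cmp q) \<inter> H) = int DIM('a) - 1"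
    using wall_at[OF H p(2) only] by blast
  obtain \<beta> k where b: "\<beta> \<noteq> 0" "H = hp \<beta> (of_int k)" using hyps_hpE[OF rs H] by metis
  define q where "q = p + (\<epsilon> / (2 * norm \<beta>)) *\<^sub>R \<beta>"
  have "dist p q = \<epsilon> / 2" using b e by (simp add: q_def dist_norm)
  then have qb: "q \<in> ball p \<epsilon>" using e by simp
  have "q \<bullet> \<beta> = of_int k + \<epsilon> * norm \<beta> / 2"
    using p(2) b by (simp add: q_def inner_add_left hp_def power2_norm_eq_inner[symmetric] power2_eq_square)
  then have "q \<notin> H" using b e by (simp add: hp_def)
  then show ?thesis using ew qb by blast
qed

end


lemma foldr_comp_gen: "foldr (\<circ>) xs g = foldr (\<circ>) xs id \<circ> g"
  by (induction xs) (auto simp: o_assoc)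

lemma foldr_comp_append: "foldr (\<circ>) (xs @ ys) id = foldr (\<circ>) xs id \<circ> foldr (\<circ>) ys id"
  by (simp only: foldr_append foldr_comp_gen[of xs "foldr (\<circ>) ys id"])

lemma finite_ints_le: "finite {k::int. \<bar>real_of_int k\<bar> \<le> c}"
proof -
  have "{k::int. \<bar>real_of_int k\<bar> \<le> c} \<subseteq> {- \<lceil>c\<rceil> .. \<lceil>c\<rceil>}"
    by (auto simp: abs_le_iff) (linarith+)
  then show ?thesis by (rule finite_subset) simp
qed

locale ars0 = ars +
  fixes a0 :: 'a
  assumes a0: "a0 \<in> Cmp"
begin

abbreviation "A0 \<equiv> connected_component_set Cmp a0"
abbreviation "S \<equiv> simple_refls \<Phi> A0"
definition "G = {foldr (\<circ>) ss id | ss. set ss \<subseteq> S}"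
definition "N x = {H \<in> hyps \<Phi>. sep H a0 x}"

lemma S_refls: "S \<subseteq> refls \<Phi>"
  by (auto simp: simple_refls_def)

lemma fold_affW: "set ss \<subseteq> S \<Longrightarrow> foldr (\<circ>) ss id \<in> affW \<Phi>"
proof (induction ss)
  case Nil
  show ?case using affW.affW_id[of \<Phi>] unfolding id_def by simp
next
  case (Cons s ss)
  have s: "s \<in> refls \<Phi>" using Cons.prems S_refls by auto
  have f: "foldr (\<circ>) ss id \<in> affW \<Phi>" using Cons.IH Cons.prems by (meson set_subset_Cons subset_trans)
  have e: "foldr (\<circ>) (s # ss) id = s \<circ> foldr (\<circ>) ss id" by (simp only: foldr_Cons comp_apply)
  show ?case unfolding e using affW.affW_step[OF s f] .
qed

lemma G_affW: "u \<in> G \<Longrightarrow> u \<in> affW \<Phi>"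
  using fold_affW by (auto simp: G_def)

lemma G_comp: "u \<in> G \<Longrightarrow> v \<in> G \<Longrightarrow> u \<circ> v \<in> G"
proof -
  assume "u \<in> G" "v \<in> G"
  then obtain ss ss' where "set ss \<subseteq> S" "u = foldr (\<circ>) ss id" "set ss' \<subseteq> S" "v = foldr (\<circ>) ss' id"
    unfolding G_def by blast
  moreover have "u \<circ> v = foldr (\<circ>) (ss @ ss') id" using calculation by (metis foldr_comp_append)
  ultimately have "set (ss @ ss') \<subseteq> S" "u \<circ> v = foldr (\<circ>) (ss @ ss') id" by auto
  then show ?thesis unfolding G_def by blast
qed

lemma G_id: "id \<in> G"
  unfolding G_def by (auto intro!: exI[of _ "[]"])

lemma G_S: "s \<in> S \<Longrightarrow> s \<in> G"
  unfolding G_def by (auto intro!: exI[of _ "[s]"])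

lemma fold_rev_inv: "set ss \<subseteq> S \<Longrightarrow> foldr (\<circ>) (rev ss) id \<circ> foldr (\<circ>) ss id = id"
proof (induction ss)
  case Nil
  then show ?case by simp
next
  case (Cons s ss)
  have ss: "s \<circ> s = id" using refl_invol[OF rs] Cons S_refls by auto
  have r: "foldr (\<circ>) (rev (s # ss)) id = foldr (\<circ>) (rev ss) id \<circ> s"
    using foldr_comp_append[of "rev ss" "[s]"] by simp
  have "foldr (\<circ>) (rev (s # ss)) id \<circ> foldr (\<circ>) (s # ss) id
      = foldr (\<circ>) (rev ss) id \<circ> (s \<circ> s) \<circ> foldr (\<circ>) ss id"
    unfolding r by (simp add: o_assoc)
  also have "\<dots> = foldr (\<circ>) (rev ss) id \<circ> foldr (\<circ>) ss id" by (simp only: ss comp_id)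
  also have "\<dots> = id" using Cons.IH Cons.prems by (meson set_subset_Cons subset_trans)
  finally show ?case .
qed

lemma G_inv: "u \<in> G \<Longrightarrow> inv u \<in> G"
proof -
  assume "u \<in> G"
  then obtain ss where ss: "set ss \<subseteq> S" "u = foldr (\<circ>) ss id" by (auto simp: G_def)
  have b: "bij u" using affW_bij[OF rs fold_affW[OF ss(1)]] ss by simp
  have "foldr (\<circ>) (rev ss) id \<circ> u = id" using fold_rev_inv[OF ss(1)] ss by simp
  moreover have "u \<circ> inv u = id" using b bij_is_surj surj_iff by blast
  ultimately have "inv u = foldr (\<circ>) (rev ss) id"
    by (metis comp_assoc comp_id id_comp)
  then show ?thesis using ss(1) unfolding G_def by (intro CollectI exI[of _ "rev ss"]) auto
qed

lemma finite_sep: "finite {H \<in> hyps \<Phi>. sep H x y}"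
proof -
  define B where "B = (\<lambda>\<beta>. {k::int. \<bar>real_of_int k\<bar> \<le> \<bar>x \<bullet> \<beta>\<bar> + \<bar>y \<bullet> \<beta>\<bar>})"
  have "{H \<in> hyps \<Phi>. sep H x y} \<subseteq> (\<lambda>(\<beta>, k). hp \<beta> (of_int k)) ` (SIGMA \<beta>:\<Phi>. B \<beta>)"
  proof
    fix H assume H: "H \<in> {H \<in> hyps \<Phi>. sep H x y}"
    obtain \<beta> k where b: "\<beta> \<in> \<Phi>" "H = hp \<beta> (of_int k)" using H unfolding hyps_hp by blast
    obtain z where z: "z \<in> closed_segment x y" "z \<in> H" using H unfolding sep_def by blast
    obtain u where u: "0 \<le> u" "u \<le> 1" "z = (1 - u) *\<^sub>R x + u *\<^sub>R y" using z(1) by (auto simp: in_segment)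
    have "z \<bullet> \<beta> = (1 - u) * (x \<bullet> \<beta>) + u * (y \<bullet> \<beta>)" using u by (simp add: inner_add_left)
    then have "\<bar>z \<bullet> \<beta>\<bar> \<le> (1 - u) * \<bar>x \<bullet> \<beta>\<bar> + u * \<bar>y \<bullet> \<beta>\<bar>"
      using u by (metis abs_mult abs_of_nonneg abs_triangle_ineq diff_ge_0_iff_ge)
    also have "\<dots> \<le> \<bar>x \<bullet> \<beta>\<bar> + \<bar>y \<bullet> \<beta>\<bar>" using u
      by (intro add_mono mult_left_le_one_le) auto
    finally have "k \<in> B \<beta>" using z(2) b by (simp add: B_def hp_def)
    then show "H \<in> (\<lambda>(\<beta>, k). hp \<beta> (of_int k)) ` (SIGMA \<beta>:\<Phi>. B \<beta>)" using b by force
  qed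
  moreover have "finite (SIGMA \<beta>:\<Phi>. B \<beta>)"
    using rs_fin[OF rs] by (auto simp: B_def finite_ints_le)
  ultimately show ?thesis by (meson finite_imageI finite_subset)
qed

lemma simple_from_wall:
  assumes u: "u \<in> affW \<Phi>" and b: "b \<in> Cmp" and ub: "u a0 \<in> connected_component_set Cmp b"
    and t: "t \<in> refls \<Phi>"
    and w: "aff_dim (closure (connected_component_set Cmp b) \<inter> fixH t) \<ge> int DIM('a) - 1"
  shows "inv u \<circ> t \<circ> u \<in> S"
proof -
  have bu: "bij u" using affW_bij[OF rs u] .
  have iu: "inv u \<in> affW \<Phi>" using affW_inv[OF rs u] .
  have biu: "bij (inv u)" using affW_bij[OF rs iu] .
  have iiu: "inv (inv u) = u" using bu by (simp add: inv_inv_eq)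
  have sR: "inv u \<circ> t \<circ> u \<in> refls \<Phi>" using affW_conj[OF rs t iu] iiu by simp
  have fs: "fixH (inv u \<circ> t \<circ> u) = inv u ` fixH t" using fixH_conj[OF biu, of t] iiu by simp
  have ua0: "u a0 \<in> Cmp" using affW_Cmp[OF u a0] .
  have e1: "connected_component_set Cmp b = connected_component_set Cmp (u a0)"
    using connected_component_eq[OF ub] by simp
  have e2: "inv u ` connected_component_set Cmp (u a0) = A0"
    using ccs_img[OF iu ua0] bu by (simp add: bij_is_inj)
  have "inv u ` closure (connected_component_set Cmp b) \<subseteq> closure (inv u ` connected_component_set Cmp b)"
    by (rule image_closure_subset) (auto intro: affmap_cont[OF affW_affmap[OF rs iu]] closure_subset[THEN subsetD])
  then have "inv u ` (closure (connected_component_set Cmp b) \<inter> fixH t) \<subseteq> fixH (inv u \<circ> t \<circ> u) \<inter> closure A0"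
    unfolding fs e1 e2[symmetric] by blast
  then have "aff_dim (inv u ` (closure (connected_component_set Cmp b) \<inter> fixH t)) \<le> aff_dim (fixH (inv u \<circ> t \<circ> u) \<inter> closure A0)"
    by (rule aff_dim_subset)
  then have "aff_dim (fixH (inv u \<circ> t \<circ> u) \<inter> closure A0) \<ge> int DIM('a) - 1"
    using affmap_aff_dim[OF affW_affmap[OF rs iu]] w by simp
  moreover have "aff_dim (fixH (inv u \<circ> t \<circ> u) \<inter> closure A0) \<le> int DIM('a) - 1"
    using aff_dim_subset[of "fixH (inv u \<circ> t \<circ> u) \<inter> closure A0" "fixH (inv u \<circ> t \<circ> u)"]
      hyps_aff_dim[OF fixH_refls[OF rs sR]] by auto
  ultimately show ?thesis using sR by (simp add: simple_refls_def)
qed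

end


context ars0 begin

lemma N_ccs: "b \<in> connected_component_set Cmp a \<Longrightarrow> a \<in> Cmp \<Longrightarrow> N b = N a"
proof -
  assume b: "b \<in> connected_component_set Cmp a" and a: "a \<in> Cmp"
  have bC: "b \<in> Cmp" using b ccs_Cmp by blast
  have "sep H a0 b = sep H a0 a" if H: "H \<in> hyps \<Phi>" for H
    using sep_xor[OF H Cmp_not_in[OF a0 H] Cmp_not_in[OF a H] Cmp_not_in[OF bC H]] ccs_side[OF H b] by simp
  then show ?thesis unfolding N_def by blast
qed

lemma reach_aux: "\<forall>a. a \<in> Cmp \<longrightarrow> card (N a) = n \<longrightarrow> (\<exists>u\<in>G. u a0 \<in> connected_component_set Cmp a)"
proof (induction n rule: less_induct)
  case (less n)
  show ?case
  proof (intro allI impI)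
    fix a assume a: "a \<in> Cmp" and cn: "card (N a) = n"
    have fin: "finite (N x)" for x unfolding N_def by (rule finite_sep)
    show "\<exists>u\<in>G. u a0 \<in> connected_component_set Cmp a"
    proof (cases "N a = {}")
      case True
      then have "a \<in> connected_component_set Cmp a0"
        using nosep_ccs[OF a0 a] unfolding N_def by blast
      then have "a0 \<in> connected_component_set Cmp a" by (simp add: connected_component_sym)
      then show ?thesis using G_id by (metis id_apply)
    next
      case False
      have "connected_component_set Cmp a \<noteq> {}" using a
        by (metis connected_component_refl_eq empty_iff mem_Collect_eq)
      then have "\<exists>a'\<in>connected_component_set Cmp a. \<forall>H\<in>hyps \<Phi>. \<forall>H'\<in>hyps \<Phi>. H \<noteq> H' \<longrightarrow> closed_segment a0 a' \<inter> H \<inter> H' = {}"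
        by (rule generic[OF a0 open_ccs])
      then obtain a' where a': "a' \<in> connected_component_set Cmp a"
        and gen: "\<forall>H\<in>hyps \<Phi>. \<forall>H'\<in>hyps \<Phi>. H \<noteq> H' \<longrightarrow> closed_segment a0 a' \<inter> H \<inter> H' = {}"
        by blast
      have a'C: "a' \<in> Cmp" using a' ccs_Cmp by blast
      have Na': "N a' = N a" using N_ccs[OF a' a] .
      have "\<exists>H\<in>hyps \<Phi>. sep H a0 a'" using False Na' unfolding N_def by blast
      then obtain H where H: "H \<in> hyps \<Phi>" "sep H a0 a'"
        and wl: "aff_dim (closure (connected_component_set Cmp a') \<inter> H) = int DIM('a) - 1"
        using first_wall[OF a0 a'C gen] by blast
      obtain t where t: "t \<in> refls \<Phi>" "fixH t = H" using hyps_refl[OF rs H(1)] by blast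
      have tW: "t \<in> affW \<Phi>" using refl_affW[OF t(1)] .
      define b where "b = t a'"
      have bC: "b \<in> Cmp" unfolding b_def using affW_Cmp[OF tW a'C] .
      have Nb: "N b = N a' - {H}"
      proof -
        have "sep H' a0 b = (sep H' a0 a' \<and> H' \<noteq> H)" if H': "H' \<in> hyps \<Phi>" for H'
        proof -
          have "sep H' a0 b = (sep H' a0 a' \<noteq> sep H' a' (t a'))"
            using sep_xor[OF H' Cmp_not_in[OF a0 H'] Cmp_not_in[OF a'C H'] Cmp_not_in[OF bC H']]
            unfolding b_def by simp
          also have "sep H' a' (t a') = (H' = H)" using adjacent[OF a'C t(1) _ H'] wl t(2) by simp
          finally show ?thesis using H(2) by auto
        qed
        then show ?thesis unfolding N_def by blast
      qed
      have "card (N b) < n" using Nb H cn Na' fin unfolding N_def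
        by (metis (no_types, lifting) card_Diff1_less mem_Collect_eq)
      then obtain u where u: "u \<in> G" "u a0 \<in> connected_component_set Cmp b"
        using less.IH bC by blast
      have uW: "u \<in> affW \<Phi>" using G_affW[OF u(1)] .
      have tb: "connected_component_set Cmp b = t ` connected_component_set Cmp a'"
        unfolding b_def using ccs_img[OF tW a'C] by simp
      have "closure (connected_component_set Cmp a') \<inter> H \<subseteq> closure (connected_component_set Cmp b) \<inter> fixH t"
      proof
        fix f assume f: "f \<in> closure (connected_component_set Cmp a') \<inter> H"
        have "t ` closure (connected_component_set Cmp a') \<subseteq> closure (t ` connected_component_set Cmp a')"
          by (rule image_closure_subset) (auto intro: affmap_cont[OF affW_affmap[OF rs tW]] closure_subset[THEN subsetD])
        moreover have "t f = f" using f t(2) unfolding fixH_def by blast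
        ultimately show "f \<in> closure (connected_component_set Cmp b) \<inter> fixH t"
          using f t(2) tb by force
      qed
      then have wb: "aff_dim (closure (connected_component_set Cmp b) \<inter> fixH t) \<ge> int DIM('a) - 1"
        using aff_dim_subset wl by metis
      define s where "s = inv u \<circ> t \<circ> u"
      have sS: "s \<in> S" unfolding s_def using simple_from_wall[OF uW bC u(2) t(1) wb] .
      have uinv: "u \<circ> inv u = id" using affW_bij[OF rs uW] bij_is_surj surj_iff by blast
      have us: "u \<circ> s = t \<circ> u" unfolding s_def by (metis uinv comp_assoc id_comp)
      have usG: "u \<circ> s \<in> G" using G_comp[OF u(1) G_S[OF sS]] .
      have "(u \<circ> s) a0 = t (u a0)" using us by (metis comp_apply)
      moreover have "t (u a0) \<in> connected_component_set Cmp (t b)"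
        using ccs_img[OF tW bC] u(2) by blast
      moreover have "t b = a'" unfolding b_def using refl_invol[OF rs t(1)] by (metis comp_apply id_apply)
      ultimately have "(u \<circ> s) a0 \<in> connected_component_set Cmp a"
        using connected_component_eq[OF a'] by simp
      then show ?thesis using usG by blast
    qed
  qed
qed

lemma reach: "a \<in> Cmp \<Longrightarrow> \<exists>u\<in>G. u a0 \<in> connected_component_set Cmp a"
  using reach_aux by blast

lemma refl_G: "t \<in> refls \<Phi> \<Longrightarrow> t \<in> G"
proof -
  assume t: "t \<in> refls \<Phi>"
  have H: "fixH t \<in> hyps \<Phi>" using fixH_refls[OF rs t] .
  obtain q where q: "q \<in> Cmp" and wq: "aff_dim (closure (connected_component_set Cmp q) \<inter> fixH t) = int DIM('a) - 1"
    using exists_wall[OF a0 H] by blast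
  obtain u where u: "u \<in> G" "u a0 \<in> connected_component_set Cmp q" using reach[OF q] by blast
  have uW: "u \<in> affW \<Phi>" using G_affW[OF u(1)] .
  have sS: "inv u \<circ> t \<circ> u \<in> S" using simple_from_wall[OF uW q u(2) t] wq by simp
  have uinv: "u \<circ> inv u = id" using affW_bij[OF rs uW] bij_is_surj surj_iff by blast
  have "t = u \<circ> (inv u \<circ> t \<circ> u) \<circ> inv u" by (metis uinv comp_assoc id_comp comp_id)
  then show ?thesis using G_comp[OF G_comp[OF u(1) G_S[OF sS]] G_inv[OF u(1)]] by simp
qed

lemma affW_G: "w \<in> affW \<Phi> \<Longrightarrow> w \<in> G"
proof (induction rule: affW.induct)
  case affW_id
  then show ?case by (rule G_id)
next
  case (affW_step r w)
  show ?case using G_comp[OF refl_G[OF affW_step(1)] affW_step(3)] .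
qed

end


context ars0 begin

lemma S_wall: "s \<in> S \<Longrightarrow> aff_dim (closure A0 \<inter> fixH s) = int DIM('a) - 1"
  by (simp add: simple_refls_def Int_commute)

lemma Nws:
  assumes w: "w \<in> affW \<Phi>" and s: "s \<in> S" and H: "H \<in> hyps \<Phi>"
  shows "sep H a0 (w (s a0)) = (sep H a0 (w a0) \<noteq> (H = w ` fixH s))"
proof -
  have sR: "s \<in> refls \<Phi>" using s S_refls by blast
  have sW: "s \<in> affW \<Phi>" using refl_affW[OF sR] .
  have wa0: "w a0 \<in> Cmp" using affW_Cmp[OF w a0] .
  have wsa0: "w (s a0) \<in> Cmp" using affW_Cmp[OF w affW_Cmp[OF sW a0]] .
  have bw: "bij w" using affW_bij[OF rs w] .
  define H'' where "H'' = inv w ` H"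
  have H''h: "H'' \<in> hyps \<Phi>" unfolding H''_def using hyps_img[OF rs affW_inv[OF rs w] H] .
  have HH: "H = w ` H''" unfolding H''_def using bw by (simp add: image_image bij_is_surj surj_f_inv_f)
  have "sep H (w a0) (w (s a0)) = sep H'' a0 (s a0)" unfolding HH by (rule sep_affW[OF w])
  also have "\<dots> = (H'' = fixH s)" using adjacent[OF a0 sR _ H''h] S_wall[OF s] by simp
  also have "\<dots> = (H = w ` fixH s)" using HH bw by (metis H''_def bij_is_inj image_inv_f_f)
  finally show ?thesis
    using sep_xor[OF H Cmp_not_in[OF a0 H] Cmp_not_in[OF wa0 H] Cmp_not_in[OF wsa0 H]] by simp
qed

lemma N_ws:
  assumes w: "w \<in> affW \<Phi>" and s: "s \<in> S"
  shows "N (w (s a0)) = (if w ` fixH s \<in> N (w a0) then N (w a0) - {w ` fixH s} else insert (w ` fixH s) (N (w a0)))"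
proof -
  have sR: "s \<in> refls \<Phi>" using s S_refls by blast
  have Hh: "w ` fixH s \<in> hyps \<Phi>" using hyps_img[OF rs w fixH_refls[OF rs sR]] .
  show ?thesis using Nws[OF w s] Hh unfolding N_def by auto
qed

lemma N_a0: "N a0 = {}"
  using a0 unfolding N_def sep_def by (auto simp: Cmp_iff)

definition "Hs ss i = foldr (\<circ>) (take i ss) id ` fixH (ss ! i)"

lemma fold_snoc: "foldr (\<circ>) (ss @ [s]) id = foldr (\<circ>) ss id \<circ> s"
  using foldr_comp_append[of ss "[s]"] by simp

lemma main_len:
  "set ss \<subseteq> S \<Longrightarrow>
    (N (foldr (\<circ>) ss id a0) = {Hs ss i | i. i < length ss} \<and> card (N (foldr (\<circ>) ss id a0)) = length ss)
    \<or> (\<exists>ss'. set ss' \<subseteq> S \<and> length ss' < length ss \<and> foldr (\<circ>) ss' id = foldr (\<circ>) ss id)"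
proof (induction ss rule: rev_induct)
  case Nil
  then show ?case using N_a0 by simp
next
  case (snoc s ss)
  have sS: "s \<in> S" and ssS: "set ss \<subseteq> S" using snoc.prems by auto
  have sR: "s \<in> refls \<Phi>" using sS S_refls by blast
  define w where "w = foldr (\<circ>) ss id"
  have wW: "w \<in> affW \<Phi>" unfolding w_def using fold_affW[OF ssS] .
  have fs: "foldr (\<circ>) (ss @ [s]) id = w \<circ> s" unfolding w_def by (rule fold_snoc)
  from snoc.IH[OF ssS] show ?case
  proof
    assume "\<exists>ss'. set ss' \<subseteq> S \<and> length ss' < length ss \<and> foldr (\<circ>) ss' id = foldr (\<circ>) ss id"
    then obtain ss' where ss': "set ss' \<subseteq> S" "length ss' < length ss" "foldr (\<circ>) ss' id = foldr (\<circ>) ss id"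
      by blast
    have e: "foldr (\<circ>) (ss' @ [s]) id = foldr (\<circ>) (ss @ [s]) id" using ss'(3) by (simp only: fold_snoc)
    have "set (ss' @ [s]) \<subseteq> S" "length (ss' @ [s]) < length (ss @ [s])" using ss' sS by auto
    then have "\<exists>ss'. set ss' \<subseteq> S \<and> length ss' < length (ss @ [s]) \<and> foldr (\<circ>) ss' id = foldr (\<circ>) (ss @ [s]) id"
      using e by (intro exI[of _ "ss' @ [s]"] conjI)
    then show ?thesis by (rule disjI2)
  next
    assume IH: "N (foldr (\<circ>) ss id a0) = {Hs ss i | i. i < length ss} \<and> card (N (foldr (\<circ>) ss id a0)) = length ss"
    define Hn where "Hn = w ` fixH s"
    have NI: "N (w a0) = {Hs ss i | i. i < length ss}" "card (N (w a0)) = length ss"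
      using IH unfolding w_def by auto
    have Nn: "N ((w \<circ> s) a0) = (if Hn \<in> N (w a0) then N (w a0) - {Hn} else insert Hn (N (w a0)))"
      using N_ws[OF wW sS] unfolding Hn_def by simp
    have Hs1: "Hs (ss @ [s]) i = Hs ss i" if "i < length ss" for i
      using that by (simp add: Hs_def nth_append)
    have Hs2: "Hs (ss @ [s]) (length ss) = Hn"
      by (simp add: Hs_def Hn_def w_def)
    show ?thesis
    proof (cases "Hn \<in> N (w a0)")
      case False
      have N': "N (foldr (\<circ>) (ss @ [s]) id a0) = insert Hn (N (w a0))"
        using Nn False unfolding fs by simp
      have setq: "{Hs (ss @ [s]) i | i. i < length (ss @ [s])} = insert Hn {Hs ss i | i. i < length ss}"
      proof (intro equalityI subsetI)
        fix x assume "x \<in> {Hs (ss @ [s]) i | i. i < length (ss @ [s])}"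
        then obtain i where i: "i < Suc (length ss)" "x = Hs (ss @ [s]) i" by auto
        show "x \<in> insert Hn {Hs ss i | i. i < length ss}"
        proof (cases "i < length ss")
          case True
          then show ?thesis using i Hs1 by auto
        next
          case False
          then have "i = length ss" using i by simp
          then show ?thesis using i Hs2 by simp
        qed
      next
        fix x assume x: "x \<in> insert Hn {Hs ss i | i. i < length ss}"
        show "x \<in> {Hs (ss @ [s]) i | i. i < length (ss @ [s])}"
        proof (cases "x = Hn")
          case True
          then show ?thesis using Hs2 by (intro CollectI exI[of _ "length ss"]) simp
        next
          case False
          then obtain i where i: "i < length ss" "x = Hs ss i" using x by auto
          then show ?thesis using Hs1[OF i(1)] by (intro CollectI exI[of _ i]) simp
        qed
      qed
      have fin: "finite (N (w a0))" unfolding N_def by (rule finite_sep)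
      have "card (N (foldr (\<circ>) (ss @ [s]) id a0)) = length (ss @ [s])"
        unfolding N' using fin False NI(2) by simp
      moreover have "N (foldr (\<circ>) (ss @ [s]) id a0) = {Hs (ss @ [s]) i | i. i < length (ss @ [s])}"
        unfolding N' setq NI(1) ..
      ultimately show ?thesis by (intro disjI1 conjI)
    next
      case True
      then obtain i where i: "i < length ss" "Hn = Hs ss i" using NI by auto
      define P where "P = take i ss"
      define si where "si = ss ! i"
      define Q where "Q = drop (Suc i) ss"
      have ssd: "ss = P @ si # Q" unfolding P_def si_def Q_def using i(1) by (simp add: id_take_nth_drop)
      define u where "u = foldr (\<circ>) P id"
      have siS: "si \<in> S" using ssS i(1) unfolding si_def by auto
      have siR: "si \<in> refls \<Phi>" using siS S_refls by blast
      have PS: "set P \<subseteq> S" "set Q \<subseteq> S" using ssS ssd by auto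
      have uW: "u \<in> affW \<Phi>" unfolding u_def using fold_affW[OF PS(1)] .
      have wd: "w = u \<circ> si \<circ> foldr (\<circ>) Q id"
        unfolding w_def u_def ssd using foldr_comp_gen[of P "si \<circ> foldr (\<circ>) Q id"] by (simp add: o_assoc)
      have r1: "u \<circ> si \<circ> inv u \<in> refls \<Phi>" using affW_conj[OF rs siR uW] .
      have r2: "w \<circ> s \<circ> inv w \<in> refls \<Phi>" using affW_conj[OF rs sR wW] .
      have f1: "fixH (u \<circ> si \<circ> inv u) = Hs ss i"
        using fixH_conj[OF affW_bij[OF rs uW]] unfolding Hs_def u_def P_def si_def by simp
      have f2: "fixH (w \<circ> s \<circ> inv w) = Hn"
        using fixH_conj[OF affW_bij[OF rs wW]] unfolding Hn_def by simp
      have req: "u \<circ> si \<circ> inv u = w \<circ> s \<circ> inv w"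
        using refls_unique[OF rs r1 r2] f1 f2 i(2) by simp
      have iw: "inv w \<circ> w = id" using affW_bij[OF rs wW] bij_is_inj inv_o_cancel by blast
      have iu: "inv u \<circ> u = id" using affW_bij[OF rs uW] bij_is_inj inv_o_cancel by blast
      have ss_: "si \<circ> si = id" using refl_invol[OF rs siR] .
      have "w \<circ> s = (w \<circ> s \<circ> inv w) \<circ> w" by (metis iw comp_assoc comp_id)
      also have "\<dots> = (u \<circ> si \<circ> inv u) \<circ> (u \<circ> si \<circ> foldr (\<circ>) Q id)" using req wd by simp
      also have "\<dots> = u \<circ> (si \<circ> (inv u \<circ> u) \<circ> si) \<circ> foldr (\<circ>) Q id" by (simp add: o_assoc)
      also have "\<dots> = u \<circ> foldr (\<circ>) Q id" by (metis iu ss_ comp_id comp_assoc id_comp)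
      also have "\<dots> = foldr (\<circ>) (P @ Q) id" unfolding u_def by (rule foldr_comp_append[symmetric])
      finally have "foldr (\<circ>) (P @ Q) id = foldr (\<circ>) (ss @ [s]) id" using fs by simp
      moreover have "length (P @ Q) < length (ss @ [s])" using ssd by simp
      moreover have "set (P @ Q) \<subseteq> S" using PS by simp
      ultimately show ?thesis by blast
    qed
  qed
qed

lemma len_eq:
  assumes w: "w \<in> affW \<Phi>"
  shows "coxeter_length S w = card (N (w a0))"
proof -
  have "w \<in> G" using affW_G[OF w] .
  then obtain ss where ss: "set ss \<subseteq> S" "w = foldr (\<circ>) ss id" unfolding G_def by blast
  let ?P = "\<lambda>n. \<exists>ss. length ss = n \<and> set ss \<subseteq> S \<and> w = foldr (\<circ>) ss id"
  have ex: "?P (length ss)" using ss by blast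
  obtain ss0 where ss0: "length ss0 = (LEAST n. ?P n)" "set ss0 \<subseteq> S" "w = foldr (\<circ>) ss0 id"
    using LeastI_ex[of ?P] ex by blast
  have cl: "coxeter_length S w = length ss0" unfolding coxeter_length_def using ss0(1) by simp
  from main_len[OF ss0(2)] show ?thesis
  proof
    assume "N (foldr (\<circ>) ss0 id a0) = {Hs ss0 i | i. i < length ss0} \<and> card (N (foldr (\<circ>) ss0 id a0)) = length ss0"
    then have "card (N (foldr (\<circ>) ss0 id a0)) = length ss0" by blast
    then show ?thesis using cl ss0(3) by simp
  next
    assume "\<exists>ss'. set ss' \<subseteq> S \<and> length ss' < length ss0 \<and> foldr (\<circ>) ss' id = foldr (\<circ>) ss0 id"
    then obtain ss' where ss': "set ss' \<subseteq> S" "length ss' < length ss0" "foldr (\<circ>) ss' id = foldr (\<circ>) ss0 id"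
      by blast
    have "?P (length ss')" using ss' ss0(3) by metis
    then have "(LEAST n. ?P n) \<le> length ss'" by (rule Least_le)
    then show ?thesis using ss'(2) ss0(1) by simp
  qed
qed

lemma descent_iff:
  assumes w: "w \<in> affW \<Phi>" and s: "s \<in> S"
  shows "coxeter_length S (w \<circ> s) < coxeter_length S w \<longleftrightarrow> w ` fixH s \<in> N (w a0)"
proof -
  have sR: "s \<in> refls \<Phi>" using s S_refls by blast
  have ws: "w \<circ> s \<in> affW \<Phi>" using affW_comp[OF w refl_affW[OF sR]] .
  have fin: "finite (N (w a0))" unfolding N_def by (rule finite_sep)
  have "coxeter_length S (w \<circ> s) = card (N (w (s a0)))" using len_eq[OF ws] by simp
  also have "\<dots> = (if w ` fixH s \<in> N (w a0) then card (N (w a0)) - 1 else card (N (w a0)) + 1)"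
    using N_ws[OF w s] fin by (simp add: card_insert_if)
  finally have e: "coxeter_length S (w \<circ> s) = (if w ` fixH s \<in> N (w a0) then card (N (w a0)) - 1 else card (N (w a0)) + 1)" .
  show ?thesis
  proof (cases "w ` fixH s \<in> N (w a0)")
    case True
    then have "card (N (w a0)) > 0" using fin card_gt_0_iff by blast
    then show ?thesis using e True len_eq[OF w] by simp
  next
    case False
    then show ?thesis using e len_eq[OF w] by simp
  qed
qed

end


lemma hp_translate: "(\<lambda>v. v + d) ` hp \<eta> e = hp \<eta> (e + d \<bullet> \<eta>)"
proof (intro equalityI subsetI)
  fix w assume "w \<in> (\<lambda>v. v + d) ` hp \<eta> e"
  then show "w \<in> hp \<eta> (e + d \<bullet> \<eta>)" by (auto simp: hp_def inner_add_left)
next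
  fix w assume w: "w \<in> hp \<eta> (e + d \<bullet> \<eta>)"
  have "w - d \<in> hp \<eta> e" using w by (simp add: hp_def inner_diff_left)
  moreover have "w = (w - d) + d" by simp
  ultimately show "w \<in> (\<lambda>v. v + d) ` hp \<eta> e" by blast
qed

lemma strictly_between_hp:
  assumes n: "\<eta> \<noteq> 0" and ne: "e \<noteq> e'"
    and v: "(e < v \<bullet> \<eta> \<and> v \<bullet> \<eta> < e') \<or> (e' < v \<bullet> \<eta> \<and> v \<bullet> \<eta> < e)"
  shows "v \<in> strictly_between (hp \<eta> e) (hp \<eta> e')"
proof -
  have nn: "\<eta> \<bullet> \<eta> \<noteq> 0" using n by simp
  define p where "p = v - ((v \<bullet> \<eta> - e) / (\<eta> \<bullet> \<eta>)) *\<^sub>R \<eta>"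
  define q where "q = v - ((v \<bullet> \<eta> - e') / (\<eta> \<bullet> \<eta>)) *\<^sub>R \<eta>"
  have p: "p \<in> hp \<eta> e" using nn by (simp add: p_def hp_def inner_diff_left)
  have q: "q \<in> hp \<eta> e'" using nn by (simp add: q_def hp_def inner_diff_left)
  define u where "u = (v \<bullet> \<eta> - e) / (e' - e)"
  have u: "0 < u" "u < 1" using v ne by (auto simp: u_def divide_simps)
  have pq: "p \<noteq> q"
  proof
    assume "p = q"
    then have "p \<bullet> \<eta> = q \<bullet> \<eta>" by simp
    then show False using p q ne by (simp add: hp_def)
  qed
  obtain \<alpha>1 \<alpha>2 where al: "\<alpha>1 = (v \<bullet> \<eta> - e) / (\<eta> \<bullet> \<eta>)" "\<alpha>2 = (v \<bullet> \<eta> - e') / (\<eta> \<bullet> \<eta>)" by blast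
  have pq': "p = v - \<alpha>1 *\<^sub>R \<eta>" "q = v - \<alpha>2 *\<^sub>R \<eta>" using al by (simp_all add: p_def q_def)
  have "(1 - u) *\<^sub>R p + u *\<^sub>R q = v - ((1 - u) * \<alpha>1 + u * \<alpha>2) *\<^sub>R \<eta>"
    unfolding pq' by (simp add: algebra_simps)
  also have "(1 - u) * \<alpha>1 + u * \<alpha>2 = 0"
    using ne nn unfolding al by (simp add: u_def field_simps)
  finally have "v = (1 - u) *\<^sub>R p + u *\<^sub>R q" by simp
  then have "v \<in> open_segment p q" using u pq by (auto simp: in_segment)
  moreover have "v \<notin> hp \<eta> e \<union> hp \<eta> e'" using v by (auto simp: hp_def)
  ultimately show ?thesis unfolding strictly_between_def using p q by blast
qed

context ars begin

lemma translation:
  assumes r1: "r1 \<in> refls \<Phi>" and r2: "r2 \<in> refls \<Phi>" and t: "fixH r2 = (\<lambda>v. t + v) ` fixH r1"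
  shows "\<exists>d. \<forall>v. r2 (r1 v) = v + d"
proof -
  obtain \<beta> k where b: "\<beta> \<in> \<Phi>" "r1 = rf \<beta> (of_int k)" using r1 by (auto simp: refls_rf)
  obtain \<gamma> m where g: "\<gamma> \<in> \<Phi>" "r2 = rf \<gamma> (of_int m)" using r2 by (auto simp: refls_rf)
  have bn: "\<beta> \<noteq> 0" and gn: "\<gamma> \<noteq> 0" using rs_nz[OF rs] b g by auto
  have "(\<lambda>v. t + v) ` hp \<beta> (of_int k) = (\<lambda>v. v + t) ` hp \<beta> (of_int k)" by (simp add: add.commute)
  also have "\<dots> = hp \<beta> (of_int k + t \<bullet> \<beta>)" by (rule hp_translate)
  finally have "hp \<gamma> (of_int m) = hp \<beta> (of_int k + t \<bullet> \<beta>)"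
    using t b(2) g(2) fixH_rf[OF bn] fixH_rf[OF gn] by simp
  then obtain c where c: "c \<noteq> 0" "\<gamma> = c *\<^sub>R \<beta>" "of_int m = c * (of_int k + t \<bullet> \<beta>)"
    using hp_par[OF bn gn] by blast
  have "r2 = rf \<beta> (of_int k + t \<bullet> \<beta>)" using g c rf_scale by simp
  then have "r2 (r1 v) = v + ((t \<bullet> \<beta>) * (2 / (\<beta> \<bullet> \<beta>))) *\<^sub>R \<beta>" for v
    using rf_comp[OF bn] b by simp
  then show ?thesis by blast
qed

end

theorem proposition4p9:
  fixes \<Phi> :: "'a::euclidean_space set" and A0 :: "'a set"
    and x r1 r2 s :: "'a \<Rightarrow> 'a"
  assumes "root_system \<Phi>"
    and "alcove \<Phi> A0"
    and "x \<in> affW \<Phi>"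
    and "r1 \<in> refls \<Phi>" and "r2 \<in> refls \<Phi>"
    and "\<exists>t. fixH r2 = (\<lambda>v. t + v) ` fixH r1"
    and "s \<in> simple_refls \<Phi> A0"
    and "coxeter_length (simple_refls \<Phi> A0) (x \<circ> s) < coxeter_length (simple_refls \<Phi> A0) x"
    and "\<not> A0 \<subseteq> strictly_between (fixH (x \<circ> s \<circ> inv x))
                                   (fixH (r2 \<circ> r1 \<circ> x \<circ> s \<circ> inv x \<circ> r1 \<circ> r2))"
  shows "coxeter_length (simple_refls \<Phi> A0) (r2 \<circ> r1 \<circ> x \<circ> s)
           < coxeter_length (simple_refls \<Phi> A0) (r2 \<circ> r1 \<circ> x)"
proof -
  note rsa = assms(1)
  interpret ars \<Phi> by (unfold_locales) (rule rsa)
  obtain a0 where a0h: "a0 \<in> Cmp" "A0 = connected_component_set Cmp a0"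
    using assms(2) unfolding alcove_def Cmp_def[symmetric] components_iff by blast
  interpret ars0 \<Phi> a0 by (unfold_locales) (rule a0h(1))
  have x: "x \<in> affW \<Phi>" and r1: "r1 \<in> refls \<Phi>" and r2: "r2 \<in> refls \<Phi>" using assms by auto
  have s: "s \<in> S" using assms(7) a0h(2) by simp
  have sR: "s \<in> refls \<Phi>" using s S_refls by blast
  obtain t where t: "fixH r2 = (\<lambda>v. t + v) ` fixH r1" using assms(6) by blast
  obtain d where d: "\<And>v. r2 (r1 v) = v + d" using translation[OF r1 r2 t] by blast
  define T where "T = r2 \<circ> r1"
  have Td: "T = (\<lambda>v. v + d)" unfolding T_def using d by (simp add: fun_eq_iff)
  have TW: "T \<in> affW \<Phi>" unfolding T_def using affW_comp[OF refl_affW[OF r2] refl_affW[OF r1]] .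
  have bT: "bij T" using affW_bij[OF rs TW] .
  have bx: "bij x" using affW_bij[OF rs x] .
  have invT: "inv T = r1 \<circ> r2"
    unfolding T_def using refl_bij[OF rs r1] refl_bij[OF rs r2] refl_inv[OF rs r1] refl_inv[OF rs r2]
    by (simp add: o_inv_distrib)
  define y where "y = T \<circ> x"
  have yW: "y \<in> affW \<Phi>" unfolding y_def using affW_comp[OF TW x] .
  define H3 where "H3 = fixH (x \<circ> s \<circ> inv x)"
  have H3x: "H3 = x ` fixH s" unfolding H3_def using fixH_conj[OF bx] .
  have H3h: "H3 \<in> hyps \<Phi>" unfolding H3x using hyps_img[OF rs x fixH_refls[OF rs sR]] .
  have e4: "r2 \<circ> r1 \<circ> x \<circ> s \<circ> inv x \<circ> r1 \<circ> r2 = T \<circ> (x \<circ> s \<circ> inv x) \<circ> inv T"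
    by (simp only: invT) (simp add: T_def o_assoc)
  define H4 where "H4 = fixH (r2 \<circ> r1 \<circ> x \<circ> s \<circ> inv x \<circ> r1 \<circ> r2)"
  have H4T: "H4 = T ` H3" unfolding H4_def e4 H3_def using fixH_conj[OF bT] .
  have H4y: "H4 = y ` fixH s" unfolding H4T H3x y_def by (simp add: image_comp)
  have H4h: "H4 \<in> hyps \<Phi>" unfolding H4T using hyps_img[OF rs TW H3h] .
  have "x ` fixH s \<in> N (x a0)" using descent_iff[OF x s] assms(8) a0h(2) by simp
  then have sep3: "sep H3 a0 (x a0)" unfolding N_def H3x by blast
  obtain \<eta> e where eta: "\<eta> \<noteq> 0" "H3 = hp \<eta> (of_int e)" using hyps_hpE[OF rs H3h] by metis
  define E where "E = (of_int e :: real)"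
  define \<delta> where "\<delta> = d \<bullet> \<eta>"
  have H3e: "H3 = hp \<eta> E" using eta E_def by simp
  have H4e: "H4 = hp \<eta> (E + \<delta>)" unfolding H4T Td H3e \<delta>_def by (rule hp_translate)
  have xa0: "x a0 \<in> Cmp" using affW_Cmp[OF x a0h(1)] .
  have ya0: "y a0 \<in> Cmp" using affW_Cmp[OF yW a0h(1)] .
  have yx: "y a0 = x a0 + d" unfolding y_def Td by simp
  have s3: "(a0 \<bullet> \<eta> < E) \<noteq> (x a0 \<bullet> \<eta> < E)"
    using sep3 sep_side[OF eta(1)] Cmp_not_in[OF a0h(1) H3h] Cmp_not_in[OF xa0 H3h] unfolding H3e by blast
  have a0n3: "a0 \<bullet> \<eta> \<noteq> E" using Cmp_not_in[OF a0h(1) H3h] unfolding H3e by (simp add: hp_def)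
  have a0n4: "a0 \<bullet> \<eta> \<noteq> E + \<delta>" using Cmp_not_in[OF a0h(1) H4h] unfolding H4e by (simp add: hp_def)
  have same: "(a0 \<bullet> \<eta> < E + \<delta>) = (a0 \<bullet> \<eta> < E)"
  proof (rule ccontr)
    assume nsame: "(a0 \<bullet> \<eta> < E + \<delta>) \<noteq> (a0 \<bullet> \<eta> < E)"
    have cA: "connected A0" unfolding a0h(2) by simp
    have d3: "A0 \<inter> hp \<eta> E = {}" using H3h connected_component_subset unfolding a0h(2) H3e[symmetric] Cmp_def by blast
    have d4: "A0 \<inter> hp \<eta> (E + \<delta>) = {}" using H4h connected_component_subset unfolding a0h(2) H4e[symmetric] Cmp_def by blast
    have a0A: "a0 \<in> A0" unfolding a0h(2) using a0h(1) by (simp add: connected_component_refl_eq)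
    note side3 = conn_side[OF cA d3]
    note side4 = conn_side[OF cA d4]
    have dn: "\<delta> \<noteq> 0" using nsame by auto
    have "A0 \<subseteq> strictly_between (hp \<eta> E) (hp \<eta> (E + \<delta>))"
    proof
      fix v assume v: "v \<in> A0"
      have "(E < v \<bullet> \<eta> \<and> v \<bullet> \<eta> < E + \<delta>) \<or> (E + \<delta> < v \<bullet> \<eta> \<and> v \<bullet> \<eta> < E)"
        using side3 side4 v a0A nsame a0n3 a0n4 by (smt (verit))
      then show "v \<in> strictly_between (hp \<eta> E) (hp \<eta> (E + \<delta>))"
        using strictly_between_hp[OF eta(1)] dn by simp
    qed
    then show False using assms(9) unfolding H3_def[symmetric] H4_def[symmetric] H3e H4e by simp
  qed
  have "sep H4 a0 (y a0)"
  proof -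
    have "(y a0 \<bullet> \<eta> < E + \<delta>) = (x a0 \<bullet> \<eta> < E)" unfolding yx \<delta>_def by (simp add: inner_add_left)
    then have "(a0 \<bullet> \<eta> < E + \<delta>) \<noteq> (y a0 \<bullet> \<eta> < E + \<delta>)" using same s3 by simp
    then show ?thesis
      using sep_side[OF eta(1)] Cmp_not_in[OF a0h(1) H4h] Cmp_not_in[OF ya0 H4h] unfolding H4e by blast
  qed
  then have "y ` fixH s \<in> N (y a0)" unfolding N_def H4y[symmetric] using H4h by blast
  then have "coxeter_length S (y \<circ> s) < coxeter_length S y" using descent_iff[OF yW s] by simp
  moreover have "y = r2 \<circ> r1 \<circ> x" unfolding y_def T_def ..
  ultimately show ?thesis using a0h(2) by simp
qed


end
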